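(* For every integer $n$ with $1\le n \leq 5$, the quotient $\mathbb{Z}[\operatorname{SL}_2(\mathbb{Z})]/((u-1)^n)$ of the group ring by the two-sided ideal generated by $(u-1)^n$ is a finitely generated $\mathbb{Z}$-module.
   Context: $u = \begin{pmatrix}1 & 1 \\ 0 & 1\end{pmatrix}\in\operatorname{SL}_2(\mathbb{Z})$, and $\mathbb{Z}[\operatorname{SL}_2(\mathbb{Z})]$ is the integral group ring of the abstract group $\operatorname{SL}_2(\mathbb{Z})$. *)

theory Defs
  imports Main "HOL-Library.Poly_Mapping"
begin

text \<open>A matrix (a b; c d) is stored as the tuple (a,b,c,d).\<close>
typedef sl2z = "{(a, b, c, d). (a :: int) * d - b * c = 1}"
  morphisms sl2z_entries Abs_sl2z
  by (rule exI[of _ "(1, 0, 0, 1)"]) simp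

setup_lifting type_definition_sl2z

lift_definition sl2z_one :: sl2z is "(1, 0, 0, 1)" by simp

lift_definition sl2z_mult :: "sl2z \<Rightarrow> sl2z \<Rightarrow> sl2z" is
  "\<lambda>(a, b, c, d) (a', b', c', d').
     (a * a' + b * c', a * b' + b * d', c * a' + d * c', c * b' + d * d')"
proof (clarsimp split: prod.splits)
  fix a b c d a' b' c' d' :: int
  assume "a * d - b * c = 1" "a' * d' - b' * c' = 1"
  moreover have "(a * a' + b * c') * (c * b' + d * d') - (a * b' + b * d') * (c * a' + d * c')
      = (a * d - b * c) * (a' * d' - b' * c')" by (simp add: algebra_simps)
  ultimately show "(a * a' + b * c') * (c * b' + d * d') - (a * b' + b * d') * (c * a' + d * c') = 1"
    by simp
qed

lift_definition sl2z_u :: sl2z is "(1, 1, 0, 1)" by simp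

type_synonym grz = "sl2z \<Rightarrow>\<^sub>0 int"

definition gr_mult :: "grz \<Rightarrow> grz \<Rightarrow> grz" where
  "gr_mult p q = (\<Sum>g\<in>Poly_Mapping.keys p. \<Sum>h\<in>Poly_Mapping.keys q.
       Poly_Mapping.single (sl2z_mult g h) (Poly_Mapping.lookup p g * Poly_Mapping.lookup q h))"

definition gr_one :: grz where
  "gr_one = Poly_Mapping.single sl2z_one 1"

definition gr_u :: grz where
  "gr_u = Poly_Mapping.single sl2z_u 1"

primrec gr_pow :: "grz \<Rightarrow> nat \<Rightarrow> grz" where
  "gr_pow x 0 = gr_one"
| "gr_pow x (Suc n) = gr_mult (gr_pow x n) x"

definition gr_smult :: "int \<Rightarrow> grz \<Rightarrow> grz" where
  "gr_smult k p = Poly_Mapping.map (\<lambda>v. k * v) p"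

inductive_set gen_ideal :: "grz \<Rightarrow> grz set" for w :: grz where
  gen: "w \<in> gen_ideal w"
| zero: "0 \<in> gen_ideal w"
| add: "x \<in> gen_ideal w \<Longrightarrow> y \<in> gen_ideal w \<Longrightarrow> x + y \<in> gen_ideal w"
| neg: "x \<in> gen_ideal w \<Longrightarrow> - x \<in> gen_ideal w"
| lmult: "x \<in> gen_ideal w \<Longrightarrow> gr_mult a x \<in> gen_ideal w"
| rmult: "x \<in> gen_ideal w \<Longrightarrow> gr_mult x a \<in> gen_ideal w"

text \<open>The quotient Z[G]/I is a finitely generated Z-module iff there is a finite
  set S of elements of Z[G] whose classes generate the quotient, i.e. every
  element is congruent modulo I to an integer combination of elements of S.\<close>
definition fg_quotient :: "grz set \<Rightarrow> bool" where
  "fg_quotient I \<longleftrightarrow> (\<exists>S. finite S \<and>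
      (\<forall>x. \<exists>c :: grz \<Rightarrow> int. x - (\<Sum>s\<in>S. gr_smult (c s) s) \<in> I))"

end

theory Submission
  imports Defs
begin


lift_definition sl2z_s :: sl2z is "(0, -1, 1, 0)" by simp

lemma sl2z_eqI: "sl2z_entries g = sl2z_entries h \<Longrightarrow> g = h"
  by (simp add: sl2z_entries_inject)

lemma sl2z_mult_assoc: "sl2z_mult (sl2z_mult a b) c = sl2z_mult a (sl2z_mult b c)"
  by transfer (auto simp: algebra_simps split: prod.splits)

lemma sl2z_one_left[simp]: "sl2z_mult sl2z_one a = a"
  by transfer auto
lemma sl2z_one_right[simp]: "sl2z_mult a sl2z_one = a"
  by transfer auto

lemma gr_mult_sets:
  assumes "finite A" "finite B" "Poly_Mapping.keys p \<subseteq> A" "Poly_Mapping.keys q \<subseteq> B"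
  shows "gr_mult p q = (\<Sum>g\<in>A. \<Sum>h\<in>B.
       Poly_Mapping.single (sl2z_mult g h) (Poly_Mapping.lookup p g * Poly_Mapping.lookup q h))"
proof -
  have "gr_mult p q = (\<Sum>g\<in>A. \<Sum>h\<in>Poly_Mapping.keys q.
       Poly_Mapping.single (sl2z_mult g h) (Poly_Mapping.lookup p g * Poly_Mapping.lookup q h))"
    unfolding gr_mult_def
    by (rule sum.mono_neutral_left) (auto simp: assms in_keys_iff)
  also have "\<dots> = (\<Sum>g\<in>A. \<Sum>h\<in>B.
       Poly_Mapping.single (sl2z_mult g h) (Poly_Mapping.lookup p g * Poly_Mapping.lookup q h))"
    by (rule sum.cong[OF refl], rule sum.mono_neutral_left) (auto simp: assms in_keys_iff)
  finally show ?thesis .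
qed

lemma gr_mult_add_left: "gr_mult (p + q) r = gr_mult p r + gr_mult q r"
proof -
  let ?A = "Poly_Mapping.keys p \<union> Poly_Mapping.keys q" and ?B = "Poly_Mapping.keys r"
  have 1: "Poly_Mapping.keys (p+q) \<subseteq> ?A" by (rule keys_add)
  show ?thesis
    apply (subst gr_mult_sets[of ?A ?B], simp, simp, rule 1, simp)
    apply (subst gr_mult_sets[of ?A ?B p], simp, simp, simp, simp)
    apply (subst gr_mult_sets[of ?A ?B q], simp, simp, simp, simp)
    by (simp add: lookup_add distrib_right single_add sum.distrib)
qed

lemma gr_mult_add_right: "gr_mult r (p + q) = gr_mult r p + gr_mult r q"
proof -
  let ?A = "Poly_Mapping.keys p \<union> Poly_Mapping.keys q" and ?B = "Poly_Mapping.keys r"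
  have 1: "Poly_Mapping.keys (p+q) \<subseteq> ?A" by (rule keys_add)
  show ?thesis
    apply (subst gr_mult_sets[of ?B ?A], simp, simp, simp, rule 1)
    apply (subst gr_mult_sets[of ?B ?A r p], simp, simp, simp, simp)
    apply (subst gr_mult_sets[of ?B ?A r q], simp, simp, simp, simp)
    by (simp add: lookup_add distrib_left single_add sum.distrib)
qed

lemma gr_mult_zero_left[simp]: "gr_mult 0 q = 0" by (simp add: gr_mult_def)
lemma gr_mult_zero_right[simp]: "gr_mult q 0 = 0" by (simp add: gr_mult_def)

lemma gr_mult_neg_left: "gr_mult (- p) q = - gr_mult p q"
  using gr_mult_add_left[of "-p" p q] by (simp add: eq_neg_iff_add_eq_0)
lemma gr_mult_neg_right: "gr_mult q (- p) = - gr_mult q p"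
  using gr_mult_add_right[of q "-p" p] by (simp add: eq_neg_iff_add_eq_0)
lemma gr_mult_diff_left: "gr_mult (p - q) r = gr_mult p r - gr_mult q r"
  using gr_mult_add_left[of p "-q" r] by (simp add: gr_mult_neg_left)
lemma gr_mult_diff_right: "gr_mult r (p - q) = gr_mult r p - gr_mult r q"
  using gr_mult_add_right[of r p "-q"] by (simp add: gr_mult_neg_right)

lemma gr_mult_single: "gr_mult (Poly_Mapping.single g a) (Poly_Mapping.single h b) = Poly_Mapping.single (sl2z_mult g h) (a * b)"
  by (subst gr_mult_sets[of "{g}" "{h}"]) auto

lemma gr_mult_sum_left: "finite S \<Longrightarrow> gr_mult (\<Sum>s\<in>S. f s) q = (\<Sum>s\<in>S. gr_mult (f s) q)"
  by (induction S rule: finite_induct) (auto simp: gr_mult_add_left)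
lemma gr_mult_sum_right: "finite S \<Longrightarrow> gr_mult q (\<Sum>s\<in>S. f s) = (\<Sum>s\<in>S. gr_mult q (f s))"
  by (induction S rule: finite_induct) (auto simp: gr_mult_add_right)
lemma gr_mult_sum_list_left: "gr_mult (sum_list xs) q = sum_list (map (\<lambda>x. gr_mult x q) xs)"
  by (induction xs) (auto simp: gr_mult_add_left)
lemma gr_mult_sum_list_right: "gr_mult q (sum_list xs) = sum_list (map (\<lambda>x. gr_mult q x) xs)"
  by (induction xs) (auto simp: gr_mult_add_right)

lemma poly_decomp: "x = (\<Sum>g\<in>Poly_Mapping.keys x. Poly_Mapping.single g (Poly_Mapping.lookup x g))"
proof (rule poly_mapping_eqI)
  fix k
  have "Poly_Mapping.lookup (\<Sum>g\<in>Poly_Mapping.keys x. Poly_Mapping.single g (Poly_Mapping.lookup x g)) k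
     = (\<Sum>g\<in>Poly_Mapping.keys x. (if g = k then Poly_Mapping.lookup x g else 0))"
    by (simp add: lookup_sum lookup_single when_def)
  also have "\<dots> = Poly_Mapping.lookup x k"
    by (simp add: in_keys_iff)
  finally show "Poly_Mapping.lookup x k = Poly_Mapping.lookup (\<Sum>g\<in>Poly_Mapping.keys x. Poly_Mapping.single g (Poly_Mapping.lookup x g)) k" by simp
qed




abbreviation "Iu \<equiv> gen_ideal (gr_pow (gr_u - gr_one) 5)"

lemma I_diff: "x \<in> gen_ideal w \<Longrightarrow> y \<in> gen_ideal w \<Longrightarrow> x - y \<in> gen_ideal w"
  unfolding diff_conv_add_uminus by (intro gen_ideal.add gen_ideal.neg)

lemma I_sum: "finite S \<Longrightarrow> (\<And>s. s \<in> S \<Longrightarrow> f s \<in> gen_ideal w) \<Longrightarrow> (\<Sum>s\<in>S. f s) \<in> gen_ideal w"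
proof (induction S rule: finite_induct)
  case empty then show ?case by (simp add: gen_ideal.zero)
next
  case (insert x F) then show ?case by (simp add: gen_ideal.add)
qed

definition Mset :: "sl2z set \<Rightarrow> grz set \<Rightarrow> grz set" where
  "Mset G I = {x. \<exists>f. x - (\<Sum>g\<in>G. Poly_Mapping.single g (f g)) \<in> I}"

context fixes w :: grz and G :: "sl2z set" assumes finG: "finite G"
begin

lemma M_I: "x \<in> gen_ideal w \<Longrightarrow> x \<in> Mset G (gen_ideal w)"
  unfolding Mset_def by (rule CollectI, rule exI[of _ "\<lambda>_. 0"]) simp

lemma M_add: "x \<in> Mset G (gen_ideal w) \<Longrightarrow> y \<in> Mset G (gen_ideal w) \<Longrightarrow> x + y \<in> Mset G (gen_ideal w)"
proof -
  assume "x \<in> Mset G (gen_ideal w)" "y \<in> Mset G (gen_ideal w)"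
  then obtain f h where f: "x - (\<Sum>g\<in>G. Poly_Mapping.single g (f g)) \<in> gen_ideal w"
    and h: "y - (\<Sum>g\<in>G. Poly_Mapping.single g (h g)) \<in> gen_ideal w" unfolding Mset_def by blast
  have eq: "(x + y) - (\<Sum>g\<in>G. Poly_Mapping.single g (f g + h g)) =
     (x - (\<Sum>g\<in>G. Poly_Mapping.single g (f g))) + (y - (\<Sum>g\<in>G. Poly_Mapping.single g (h g)))"
    by (simp add: single_add sum.distrib)
  have fin: "(x + y) - (\<Sum>g\<in>G. Poly_Mapping.single g (f g + h g)) \<in> gen_ideal w"
    unfolding eq by (rule gen_ideal.add[OF f h])
  show ?thesis unfolding Mset_def by (rule CollectI, rule exI[of _ "\<lambda>g. f g + h g"], rule fin)
qed

lemma M_plusI: "x - y \<in> gen_ideal w \<Longrightarrow> y \<in> Mset G (gen_ideal w) \<Longrightarrow> x \<in> Mset G (gen_ideal w)"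
proof -
  assume a: "x - y \<in> gen_ideal w" "y \<in> Mset G (gen_ideal w)"
  have "(x - y) + y \<in> Mset G (gen_ideal w)" by (rule M_add[OF M_I[OF a(1)] a(2)])
  then show ?thesis by simp
qed

lemma M_sum: "finite S \<Longrightarrow> (\<And>s. s \<in> S \<Longrightarrow> f s \<in> Mset G (gen_ideal w)) \<Longrightarrow> (\<Sum>s\<in>S. f s) \<in> Mset G (gen_ideal w)"
proof (induction S rule: finite_induct)
  case empty then show ?case by (simp add: M_I gen_ideal.zero)
next
  case (insert x F) then show ?case by (simp add: M_add)
qed

lemma M_sum_list: "(\<And>s. s \<in> set xs \<Longrightarrow> s \<in> Mset G (gen_ideal w)) \<Longrightarrow> sum_list xs \<in> Mset G (gen_ideal w)"
proof (induction xs)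
  case Nil then show ?case by (simp add: M_I gen_ideal.zero)
next
  case (Cons x xs) then show ?case by (simp add: M_add)
qed

lemma M_gen: "g \<in> G \<Longrightarrow> Poly_Mapping.single g c \<in> Mset G (gen_ideal w)"
  unfolding Mset_def
proof (rule CollectI, rule exI[of _ "\<lambda>h. if h = g then c else 0"])
  assume "g \<in> G"
  have "(\<Sum>h\<in>G. Poly_Mapping.single h (if h = g then c else 0)) = (\<Sum>h\<in>G. if h = g then Poly_Mapping.single g c else 0)"
    by (rule sum.cong) auto
  also have "\<dots> = Poly_Mapping.single g c" using \<open>g \<in> G\<close> finG by simp
  finally show "Poly_Mapping.single g c - (\<Sum>h\<in>G. Poly_Mapping.single h (if h = g then c else 0)) \<in> gen_ideal w"
    by (simp add: gen_ideal.zero)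
qed

lemma M_scale: "Poly_Mapping.single h 1 \<in> Mset G (gen_ideal w) \<Longrightarrow> Poly_Mapping.single h c \<in> Mset G (gen_ideal w)"
proof -
  assume "Poly_Mapping.single h 1 \<in> Mset G (gen_ideal w)"
  then obtain f where f: "Poly_Mapping.single h 1 - (\<Sum>g\<in>G. Poly_Mapping.single g (f g)) \<in> gen_ideal w"
    unfolding Mset_def by blast
  have "gr_mult (Poly_Mapping.single sl2z_one c) (Poly_Mapping.single h 1 - (\<Sum>g\<in>G. Poly_Mapping.single g (f g)))
     = Poly_Mapping.single h c - (\<Sum>g\<in>G. Poly_Mapping.single g (c * f g))"
    by (simp add: gr_mult_diff_right gr_mult_sum_right[OF finG] gr_mult_single)
  then have fin: "Poly_Mapping.single h c - (\<Sum>g\<in>G. Poly_Mapping.single g (c * f g)) \<in> gen_ideal w"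
    using gen_ideal.lmult[OF f, of "Poly_Mapping.single sl2z_one c"] by simp
  show ?thesis unfolding Mset_def by (rule CollectI, rule exI[of _ "\<lambda>g. c * f g"], rule fin)
qed

lemma M_rmult:
  assumes x: "x \<in> Mset G (gen_ideal w)" and cl: "\<And>g. g \<in> G \<Longrightarrow> Poly_Mapping.single (sl2z_mult g t) 1 \<in> Mset G (gen_ideal w)"
  shows "gr_mult x (Poly_Mapping.single t 1) \<in> Mset G (gen_ideal w)"
proof -
  obtain f where f: "x - (\<Sum>g\<in>G. Poly_Mapping.single g (f g)) \<in> gen_ideal w"
    using x unfolding Mset_def by blast
  have e: "gr_mult (x - (\<Sum>g\<in>G. Poly_Mapping.single g (f g))) (Poly_Mapping.single t 1)
    = gr_mult x (Poly_Mapping.single t 1) - (\<Sum>g\<in>G. Poly_Mapping.single (sl2z_mult g t) (f g))"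
    by (simp add: gr_mult_diff_left gr_mult_sum_left[OF finG] gr_mult_single)
  have "(\<Sum>g\<in>G. Poly_Mapping.single (sl2z_mult g t) (f g)) \<in> Mset G (gen_ideal w)"
    by (rule M_sum[OF finG], rule M_scale, rule cl)
  moreover have "gr_mult x (Poly_Mapping.single t 1) - (\<Sum>g\<in>G. Poly_Mapping.single (sl2z_mult g t) (f g)) \<in> gen_ideal w"
    using gen_ideal.rmult[OF f, of "Poly_Mapping.single t 1"] e by simp
  ultimately show ?thesis by (rule M_plusI[rotated])
qed

lemma M_all: "(\<And>g. Poly_Mapping.single g 1 \<in> Mset G (gen_ideal w)) \<Longrightarrow> fg_quotient (gen_ideal w)"
proof -
  assume all: "\<And>g. Poly_Mapping.single g 1 \<in> Mset G (gen_ideal w)"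
  have x: "x \<in> Mset G (gen_ideal w)" for x
    by (subst poly_decomp, rule M_sum, simp, rule M_scale, rule all)
  let ?sg = "\<lambda>g. Poly_Mapping.single g (1::int)"
  have inj: "inj_on ?sg G"
  proof (rule inj_onI)
    fix a b assume "?sg a = ?sg b"
    then have "Poly_Mapping.lookup (?sg a) a = Poly_Mapping.lookup (?sg b) a" by simp
    then show "a = b" by (simp add: lookup_single when_def split: if_splits)
  qed
  show ?thesis unfolding fg_quotient_def
  proof (rule exI[of _ "?sg ` G"], intro conjI allI)
    show "finite (?sg ` G)" using finG by simp
    fix x
    obtain f where f: "x - (\<Sum>g\<in>G. Poly_Mapping.single g (f g)) \<in> gen_ideal w" using x[of x] unfolding Mset_def by blast
    let ?c = "\<lambda>s. f (inv_into G ?sg s)"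
    have "(\<Sum>s\<in>?sg ` G. gr_smult (?c s) s) = (\<Sum>g\<in>G. gr_smult (?c (?sg g)) (?sg g))"
      by (simp add: sum.reindex[OF inj])
    also have "\<dots> = (\<Sum>g\<in>G. Poly_Mapping.single g (f g))"
      by (rule sum.cong[OF refl]) (simp add: inv_into_f_f[OF inj] gr_smult_def)
    finally show "\<exists>c. x - (\<Sum>s\<in>?sg ` G. gr_smult (c s) s) \<in> gen_ideal w"
      using f by (intro exI[of _ ?c]) simp
  qed
qed

end



type_synonym wpoly = "(bool list \<times> int) list"

fun wev :: "bool list \<Rightarrow> sl2z" where
  "wev [] = sl2z_one"
| "wev (x # w) = sl2z_mult (if x then sl2z_u else sl2z_s) (wev w)"

lemma wev_append: "wev (a @ b) = sl2z_mult (wev a) (wev b)"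
  by (induction a) (auto simp: sl2z_mult_assoc)

definition pev :: "wpoly \<Rightarrow> grz" where
  "pev p = sum_list (map (\<lambda>(w,c). Poly_Mapping.single (wev w) c) p)"

lemma pev_Nil[simp]: "pev [] = 0" by (simp add: pev_def)
lemma pev_Cons[simp]: "pev ((w,c) # p) = Poly_Mapping.single (wev w) c + pev p" by (simp add: pev_def)
lemma pev_append[simp]: "pev (p @ q) = pev p + pev q" by (simp add: pev_def)

datatype cmpr = EQ | GT | LT

fun wcmp :: "cmpr \<Rightarrow> bool list \<Rightarrow> bool list \<Rightarrow> cmpr" where
  "wcmp acc [] [] = acc"
| "wcmp acc (x#v) [] = GT"
| "wcmp acc [] (y#w) = LT"
| "wcmp acc (x#v) (y#w) = wcmp (case acc of EQ \<Rightarrow> (if x = y then EQ else if x then GT else LT) | _ \<Rightarrow> acc) v w"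

lemma wcmp_EQ: "wcmp acc v w = EQ \<Longrightarrow> acc = EQ \<and> v = w"
  by (induction acc v w rule: wcmp.induct) (auto split: cmpr.splits if_splits)

fun mrg :: "wpoly \<Rightarrow> wpoly \<Rightarrow> wpoly" where
  "mrg [] q = q"
| "mrg p [] = p"
| "mrg ((v,c)#p) ((w,d)#q) = (case wcmp EQ v w of
    EQ \<Rightarrow> (if c + d = 0 then mrg p q else (v,c+d) # mrg p q)
  | GT \<Rightarrow> (v,c) # mrg p ((w,d)#q)
  | LT \<Rightarrow> (w,d) # mrg ((v,c)#p) q)"

lemma pev_mrg: "pev (mrg p q) = pev p + pev q"
proof (induction p q rule: mrg.induct)
  case (3 v c p w d q)
  show ?case
  proof (cases "wcmp EQ v w")
    case EQ
    then have "v = w" using wcmp_EQ by blast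
    then show ?thesis using 3 EQ
      by (auto simp: single_add[symmetric] algebra_simps)
  next
    case GT then show ?thesis using 3 by (simp add: algebra_simps)
  next
    case LT then show ?thesis using 3 by (simp add: algebra_simps)
  qed
qed auto

definition scal :: "int \<Rightarrow> bool list \<Rightarrow> bool list \<Rightarrow> wpoly \<Rightarrow> wpoly" where
  "scal c a b p = map (\<lambda>(v,d). (a@v@b, c*d)) p"

definition negp :: "wpoly \<Rightarrow> wpoly" where
  "negp p = map (\<lambda>(v,d). (v,-d)) p"

lemma pev_negp: "pev (negp p) = - pev p"
  by (induction p) (auto simp: negp_def single_uminus)

lemma pev_scal: "pev (scal c a b p) = gr_mult (Poly_Mapping.single (wev a) c) (gr_mult (pev p) (Poly_Mapping.single (wev b) 1))"
  by (induction p) (auto simp: scal_def gr_mult_add_left gr_mult_add_right gr_mult_single wev_append sl2z_mult_assoc)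

lemma pev_scal_1: "pev (scal 1 [] [] p) = pev p"
  by (induction p) (auto simp: scal_def)
lemma pev_scal_m1: "pev (scal (-1) [] [] p) = - pev p"
  by (induction p) (auto simp: scal_def single_uminus)

definition valid :: "bool list \<times> wpoly \<Rightarrow> bool" where
  "valid r \<longleftrightarrow> Poly_Mapping.single (wev (fst r)) 1 - pev (snd r) \<in> Iu"

definition rstep :: "(nat \<Rightarrow> bool list \<times> wpoly) \<Rightarrow> nat \<Rightarrow> wpoly \<Rightarrow> nat \<times> nat \<times> nat \<Rightarrow> wpoly" where
  "rstep rl n p t = (case t of (i,r,k) \<Rightarrow>
   if i < length p \<and> r < n then (case p!i of (w,c) \<Rightarrow> (case rl r of (l,rhs) \<Rightarrow>
   if take (length l) (drop k w) = l then mrg (scal c (take k w) (drop (k + length l) w) rhs) (take i p @ drop (Suc i) p) else p)) else p)"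

lemma rstep_sound:
  assumes V: "\<And>r. r < n \<Longrightarrow> valid (rl r)"
  shows "pev p - pev (rstep rl n p t) \<in> Iu"
proof -
  obtain i r k where t: "t = (i,r,k)" by (cases t) auto
  show ?thesis
  proof (cases "i < length p \<and> r < n")
    case False
    have "rstep rl n p t = p" unfolding rstep_def t prod.case by (rule if_not_P[OF False])
    then show ?thesis by (simp add: gen_ideal.zero)
  next
    case True
    obtain w c where pi: "p ! i = (w,c)" by (cases "p!i") auto
    obtain l rhs where rr: "rl r = (l,rhs)" by (cases "rl r") auto
    show ?thesis
    proof (cases "take (length l) (drop k w) = l")
      case False then show ?thesis using True by (simp add: rstep_def t pi rr gen_ideal.zero)
    next
      case m: True
      let ?a = "take k w" and ?b = "drop (k + length l) w"
      have wsplit: "w = ?a @ l @ ?b"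
        using m by (metis append_take_drop_id drop_drop add.commute)
      have vl: "Poly_Mapping.single (wev l) 1 - pev rhs \<in> Iu" using V[of r] True rr by (simp add: valid_def)
      have pp: "pev p = pev (take i p) + Poly_Mapping.single (wev w) c + pev (drop (Suc i) p)"
      proof -
        have "p = take i p @ [p!i] @ drop (Suc i) p" using True by (simp add: id_take_nth_drop)
        then have "pev p = pev (take i p @ [p!i] @ drop (Suc i) p)" by simp
        then show ?thesis by (simp add: pi)
      qed
      have sw: "Poly_Mapping.single (wev w) c = gr_mult (Poly_Mapping.single (wev ?a) c) (gr_mult (Poly_Mapping.single (wev l) 1) (Poly_Mapping.single (wev ?b) 1))"
        by (subst wsplit) (simp add: gr_mult_single wev_append)
      have "pev p - pev (rstep rl n p t) = Poly_Mapping.single (wev w) c - pev (scal c ?a ?b rhs)"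
        using True m by (simp add: rstep_def t pi rr pev_mrg pp)
      also have "\<dots> = gr_mult (Poly_Mapping.single (wev ?a) c) (gr_mult (Poly_Mapping.single (wev l) 1 - pev rhs) (Poly_Mapping.single (wev ?b) 1))"
        by (simp add: sw pev_scal gr_mult_diff_left gr_mult_diff_right)
      also have "\<dots> \<in> Iu" by (intro gen_ideal.lmult gen_ideal.rmult vl)
      finally show ?thesis .
    qed
  qed
qed

lemma foldl_sound:
  assumes V: "\<And>r. r < n \<Longrightarrow> valid (rl r)"
  shows "pev p - pev (foldl (rstep rl n) p ts) \<in> Iu"
proof (induction ts arbitrary: p)
  case Nil then show ?case by (simp add: gen_ideal.zero)
next
  case (Cons t ts)
  have "pev p - pev (foldl (rstep rl n) p (t # ts)) = (pev p - pev (rstep rl n p t)) + (pev (rstep rl n p t) - pev (foldl (rstep rl n) (rstep rl n p t) ts))"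
    by simp
  also have "\<dots> \<in> Iu" by (intro gen_ideal.add rstep_sound[OF V] Cons)
  finally show ?case .
qed

definition dcheck :: "(nat \<Rightarrow> bool list \<times> wpoly) \<Rightarrow> nat \<Rightarrow> bool list \<times> nat \<times> nat \<times> nat \<times> nat \<times> int \<times> (nat \<times> nat \<times> nat) list \<Rightarrow> bool" where
  "dcheck rl n d = (case d of (X, a, pa, b, pb, m, tr) \<Rightarrow> (m = 1 \<or> m = -1) \<and>
     mrg (foldl (rstep rl n) (mrg (rstep rl n [(X,1)] (0,a,pa)) (negp (rstep rl n [(X,1)] (0,b,pb)))) tr)
         (scal m [] [] ((fst (rl n),1) # negp (snd (rl n)))) = [])"

lemma dcheck_sound:
  assumes V: "\<And>r. r < n \<Longrightarrow> valid (rl r)" and c: "dcheck rl n d"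
  shows "valid (rl n)"
proof -
  obtain X a pa b pb m tr where d: "d = (X, a, pa, b, pb, m, tr)" by (cases d) auto
  let ?A = "rstep rl n [(X,1)] (0,a,pa)" and ?B = "rstep rl n [(X,1)] (0,b,pb)"
  let ?sp = "mrg ?A (negp ?B)"
  let ?q = "foldl (rstep rl n) ?sp tr"
  let ?L = "Poly_Mapping.single (wev (fst (rl n))) 1 - pev (snd (rl n))"
  have m: "m = 1 \<or> m = -1" and eq: "mrg ?q (scal m [] [] ((fst (rl n),1) # negp (snd (rl n)))) = []"
    using c by (auto simp: dcheck_def d)
  have "pev [(X,1)] - pev ?B - (pev [(X,1)] - pev ?A) \<in> Iu"
    by (intro I_diff rstep_sound[OF V])
  then have sp: "pev ?sp \<in> Iu" by (simp add: pev_mrg pev_negp algebra_simps)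
  have "pev ?sp - pev ?q \<in> Iu" by (rule foldl_sound[OF V])
  then have "pev ?sp - (pev ?sp - pev ?q) \<in> Iu" by (rule I_diff[OF sp])
  then have q: "pev ?q \<in> Iu" by simp
  have e: "pev ?q + pev (scal m [] [] ((fst (rl n),1) # negp (snd (rl n)))) = 0"
    using arg_cong[OF eq, of pev] by (simp add: pev_mrg)
  show ?thesis
  proof (cases "m = 1")
    case True
    then have "pev ?q + ?L = 0" using e by (simp add: pev_scal_1 pev_negp)
    then have "?L = - pev ?q" by (simp add: eq_neg_iff_add_eq_0 add.commute)
    then show ?thesis using gen_ideal.neg[OF q] by (simp add: valid_def)
  next
    case False
    then have "m = -1" using m by simp
    then have "pev ?q + (- ?L) = 0" using e by (simp add: pev_scal_m1 pev_negp)
    then have "?L = pev ?q" by (simp add: add_eq_0_iff) (metis minus_diff_eq minus_minus)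
    then show ?thesis using q by (simp add: valid_def)
  qed
qed




lift_definition upow :: "int \<Rightarrow> sl2z" is "\<lambda>k. (1, k, 0, 1)" by simp

lemma upow_u: "sl2z_mult (sl2z_mult g (upow k)) sl2z_u = sl2z_mult g (upow (k + 1))"
  by transfer (auto simp: algebra_simps split: prod.splits)

lemma upow_uinv: "sl2z_mult (sl2z_mult (sl2z_mult (sl2z_mult (sl2z_mult (sl2z_mult (sl2z_mult
    (sl2z_mult g (upow k)) sl2z_s) sl2z_u) sl2z_s) sl2z_u) sl2z_s) sl2z_s) sl2z_s = sl2z_mult g (upow (k - 1))"
  by transfer (auto simp: algebra_simps split: prod.splits)

lemma upow_zero: "sl2z_mult g (upow 0) = g"
  by transfer (auto split: prod.splits)

definition sl2z_c :: "sl2z \<Rightarrow> int" where "sl2z_c g = fst (snd (snd (sl2z_entries g)))"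

lemma back_eq: "sl2z_mult (sl2z_mult (sl2z_mult (sl2z_mult (sl2z_mult (sl2z_mult g (upow k)) sl2z_s) sl2z_s) sl2z_s) sl2z_s) (upow (-k)) = g"
  by transfer (auto simp: algebra_simps split: prod.splits)

lemma c_step: "sl2z_c (sl2z_mult (sl2z_mult g (upow k)) sl2z_s) = sl2z_c g * k + snd (snd (snd (sl2z_entries g)))"
  unfolding sl2z_c_def by transfer (auto split: prod.splits)

lemma c_zero:
  assumes "sl2z_c g = 0"
  shows "g = upow (fst (snd (sl2z_entries g))) \<or> g = sl2z_mult (sl2z_mult sl2z_s sl2z_s) (upow (- fst (snd (sl2z_entries g))))"
proof -
  obtain a b c d where e: "sl2z_entries g = (a,b,c,d)" by (cases "sl2z_entries g") auto
  have "a * d - b * c = 1" using sl2z_entries[of g] e by simp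
  moreover have "c = 0" using assms e by (simp add: sl2z_c_def)
  ultimately have "a * d = 1" by simp
  then have "(a = 1 \<and> d = 1) \<or> (a = -1 \<and> d = -1)" by (simp add: zmult_eq_1_iff)
  then show ?thesis
  proof
    assume "a = 1 \<and> d = 1"
    then have "g = upow (fst (snd (sl2z_entries g)))"
      by (intro sl2z_eqI) (simp add: e upow.rep_eq \<open>c = 0\<close>)
    then show ?thesis ..
  next
    assume "a = -1 \<and> d = -1"
    then have "g = sl2z_mult (sl2z_mult sl2z_s sl2z_s) (upow (- fst (snd (sl2z_entries g))))"
      by (intro sl2z_eqI) (simp add: e upow.rep_eq sl2z_mult.rep_eq sl2z_s.rep_eq \<open>c = 0\<close>)
    then show ?thesis ..
  qed
qed

lemma gen_all:
  assumes one: "P sl2z_one" and ss: "\<And>g. P g \<Longrightarrow> P (sl2z_mult g sl2z_s)" and uu: "\<And>g. P g \<Longrightarrow> P (sl2z_mult g sl2z_u)"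
  shows "P g"
proof -
  have pos: "P (sl2z_mult g (upow (int n)))" if "P g" for g n
  proof (induction n)
    case 0 then show ?case using that upow_zero by simp
  next
    case (Suc n) then show ?case using uu[OF Suc] upow_u[of g "int n"] by (simp add: add.commute)
  qed
  have neg: "P (sl2z_mult g (upow (- int n)))" if "P g" for g n
  proof (induction n)
    case 0 then show ?case using that upow_zero by simp
  next
    case (Suc n)
    have "P (sl2z_mult (sl2z_mult (sl2z_mult (sl2z_mult (sl2z_mult (sl2z_mult (sl2z_mult
      (sl2z_mult g (upow (- int n))) sl2z_s) sl2z_u) sl2z_s) sl2z_u) sl2z_s) sl2z_s) sl2z_s)"
      by (intro ss uu Suc)
    moreover have "- int n - 1 = - int (Suc n)" by simp
    ultimately show ?case unfolding upow_uinv by metis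
  qed
  have upw: "P (sl2z_mult g (upow k))" if "P g" for g k
  proof (cases "k \<ge> 0")
    case True then show ?thesis using pos[OF that, of "nat k"] by simp
  next
    case False then show ?thesis using neg[OF that, of "nat (-k)"] by simp
  qed
  have "\<forall>g. nat \<bar>sl2z_c g\<bar> = m \<longrightarrow> P g" for m
  proof (induction m rule: less_induct)
    case (less m)
    show ?case
    proof (intro allI impI)
      fix g assume m: "nat \<bar>sl2z_c g\<bar> = m"
      show "P g"
      proof (cases "sl2z_c g = 0")
        case True
        then show ?thesis
        proof (rule c_zero[THEN disjE])
          assume "g = upow (fst (snd (sl2z_entries g)))"
          then show ?thesis using upw[OF one, of "fst (snd (sl2z_entries g))"] by simp
        next
          assume "g = sl2z_mult (sl2z_mult sl2z_s sl2z_s) (upow (- fst (snd (sl2z_entries g))))"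
          moreover have "P (sl2z_mult sl2z_s sl2z_s)" using ss[OF ss[OF one]] by simp
          ultimately show ?thesis using upw by metis
        qed
      next
        case False
        define d where "d = snd (snd (snd (sl2z_entries g)))"
        define k where "k = - (d div sl2z_c g)"
        define g' where "g' = sl2z_mult (sl2z_mult g (upow k)) sl2z_s"
        have "sl2z_c g' = d mod sl2z_c g"
          unfolding g'_def c_step k_def d_def[symmetric] by (simp add: minus_div_mult_eq_mod[symmetric] algebra_simps)
        then have "\<bar>sl2z_c g'\<bar> < \<bar>sl2z_c g\<bar>" using abs_mod_less[OF False] by simp
        then have "P g'" using less[rule_format, of "nat \<bar>sl2z_c g'\<bar>" g'] m by simp
        then have "P (sl2z_mult (sl2z_mult (sl2z_mult (sl2z_mult g' sl2z_s) sl2z_s) sl2z_s) (upow (-k)))"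
          by (intro upw ss)
        then show ?thesis unfolding g'_def back_eq .
      qed
    qed
  qed
  then show ?thesis by blast
qed




definition nrm :: "wpoly \<Rightarrow> wpoly" where "nrm p = List.foldr (\<lambda>t acc. mrg [t] acc) p []"

lemma pev_nrm: "pev (nrm p) = pev p"
  by (induction p) (auto simp: nrm_def pev_mrg split: prod.splits)

lemma check_eq: "mrg (nrm A) (negp (nrm B)) = [] \<Longrightarrow> pev A = pev B"
proof -
  assume "mrg (nrm A) (negp (nrm B)) = []"
  then have "pev (nrm A) + - pev (nrm B) = 0" using pev_mrg[of "nrm A" "negp (nrm B)"] by (simp add: pev_negp)
  then show ?thesis by (simp add: pev_nrm)
qed

definition pmul :: "wpoly \<Rightarrow> wpoly \<Rightarrow> wpoly" where
  "pmul p q = concat (map (\<lambda>(v,c). map (\<lambda>(w,d). (v@w, c*d)) q) p)"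

lemma pev_pmul1: "gr_mult (Poly_Mapping.single (wev v) c) (pev q) = pev (map (\<lambda>(w,d). (v@w, c*d)) q)"
  by (induction q) (auto simp: gr_mult_add_right gr_mult_single wev_append)

lemma pev_pmul: "gr_mult (pev p) (pev q) = pev (pmul p q)"
proof (induction p)
  case Nil then show ?case by (simp add: pmul_def)
next
  case (Cons a p)
  obtain v c where a: "a = (v,c)" by (cases a) auto
  have "pmul (a#p) q = map (\<lambda>(w,d). (v@w, c*d)) q @ pmul p q" by (simp add: pmul_def a)
  then show ?case by (simp add: a gr_mult_add_left pev_pmul1 Cons.IH)
qed

definition tcheck :: "(nat \<Rightarrow> bool list \<times> wpoly) \<Rightarrow> nat \<Rightarrow> bool list list \<Rightarrow> bool list \<Rightarrow> (nat \<times> nat \<times> nat) list \<times> (nat \<times> int) list \<Rightarrow> bool" where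
  "tcheck rl n W w d = (case d of (tr, nf) \<Rightarrow> list_all (\<lambda>(i,c). i < length W) nf \<and>
      mrg (foldl (rstep rl n) [(w,1)] tr) (negp (map (\<lambda>(i,c). (W!i, c)) nf)) = [])"

lemma tcheck_sound:
  assumes V: "\<And>r. r < n \<Longrightarrow> valid (rl r)" and c: "tcheck rl n W w d"
  shows "Poly_Mapping.single (wev w) 1 \<in> Mset (wev ` set W) Iu"
proof -
  obtain tr nf where d: "d = (tr, nf)" by (cases d) auto
  let ?q = "foldl (rstep rl n) [(w,1)] tr"
  let ?N = "map (\<lambda>(i,c). (W!i, c)) nf"
  have b: "list_all (\<lambda>(i,c). i < length W) nf" and e: "mrg ?q (negp ?N) = []"
    using c by (auto simp: tcheck_def d)
  have fin: "finite (wev ` set W)" by simp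
  have "pev ?q + - pev ?N = 0" using arg_cong[OF e, of pev] by (simp add: pev_mrg pev_negp)
  then have qN: "pev ?q = pev ?N" by (simp add: add_eq_0_iff)
  have "pev ?N \<in> Mset (wev ` set W) Iu"
    unfolding pev_def
  proof (rule M_sum_list[OF fin])
    fix s assume "s \<in> set (map (\<lambda>(w, c). Poly_Mapping.single (wev w) c) ?N)"
    then obtain i c where ic: "(i,c) \<in> set nf" and s: "s = Poly_Mapping.single (wev (W!i)) c" by auto
    have "i < length W" using b ic by (auto simp: list_all_iff)
    then have "wev (W!i) \<in> wev ` set W" by simp
    then show "s \<in> Mset (wev ` set W) Iu" unfolding s by (rule M_gen[OF fin])
  qed
  moreover have "pev [(w,1)] - pev ?q \<in> Iu" by (rule foldl_sound[OF V])
  moreover have "pev [(w,1)] = Poly_Mapping.single (wev w) 1" by simp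
  ultimately have "Poly_Mapping.single (wev w) 1 - pev ?N \<in> Iu" "pev ?N \<in> Mset (wev ` set W) Iu"
    using qN by simp_all
  then show ?thesis by (rule M_plusI[OF fin])
qed

lemma list_all_upt_split: "list_all P [a..<b] \<Longrightarrow> list_all P [b..<c] \<Longrightarrow> list_all P [a..<c]"
  by (cases "a \<le> b"; cases "b \<le> c") (auto simp: list_all_iff upt_add_eq_append[of a b "c - b", simplified])

lemma fg_mono: "fg_quotient I \<Longrightarrow> I \<subseteq> J \<Longrightarrow> fg_quotient J"
  unfolding fg_quotient_def by (meson subsetD)

lemma pow_in: "n \<le> m \<Longrightarrow> gr_pow x m \<in> gen_ideal (gr_pow x n)"
proof (induction m)
  case 0 then show ?case by (simp add: gen_ideal.gen)
next
  case (Suc m)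
  show ?case
  proof (cases "n = Suc m")
    case True then show ?thesis by (simp add: gen_ideal.gen)
  next
    case False then show ?thesis using Suc by (simp add: gen_ideal.rmult)
  qed
qed

lemma ideal_sub0: "x \<in> gen_ideal y \<Longrightarrow> y \<in> gen_ideal w \<Longrightarrow> x \<in> gen_ideal w"
proof (induction rule: gen_ideal.induct)
  case gen then show ?case .
next
  case zero show ?case by (rule gen_ideal.zero)
next
  case (add x z) then show ?case by (simp add: gen_ideal.add)
next
  case (neg x) then show ?case by (simp add: gen_ideal.neg)
next
  case (lmult x a) then show ?case by (simp add: gen_ideal.lmult)
next
  case (rmult x a) then show ?case by (simp add: gen_ideal.rmult)
qed

lemma ideal_sub: "y \<in> gen_ideal w \<Longrightarrow> x \<in> gen_ideal y \<Longrightarrow> x \<in> gen_ideal w"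
  using ideal_sub0 by blast

lemma wev_s: "wev [False] = sl2z_s" by simp
lemma wev_u: "wev [True] = sl2z_u" by simp

lemma final_assembly:
  assumes V: "\<And>r. r < n \<Longrightarrow> valid (rl r)"
    and nil: "[] \<in> set W"
    and T: "\<And>w t. w \<in> set W \<Longrightarrow> Poly_Mapping.single (wev (w @ [t])) 1 \<in> Mset (wev ` set W) Iu"
    and k: "1 \<le> k" "k \<le> 5"
  shows "fg_quotient (gen_ideal (gr_pow (gr_u - gr_one) k))"
proof -
  let ?G = "wev ` set W"
  have fin: "finite ?G" by simp
  have cl: "Poly_Mapping.single (sl2z_mult g (wev [t])) 1 \<in> Mset ?G Iu" if "g \<in> ?G" for g t
    using that T[of _ t] by (auto simp: wev_append)
  have "Poly_Mapping.single g 1 \<in> Mset ?G Iu" for g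
  proof (rule gen_all[where P = "\<lambda>g. Poly_Mapping.single g 1 \<in> Mset ?G Iu"])
    show "Poly_Mapping.single sl2z_one 1 \<in> Mset ?G Iu"
      using M_gen[OF fin, of sl2z_one 1] nil by force
  next
    fix g assume "Poly_Mapping.single g 1 \<in> Mset ?G Iu"
    from M_rmult[OF fin this cl[of _ False]] show "Poly_Mapping.single (sl2z_mult g sl2z_s) 1 \<in> Mset ?G Iu"
      by (simp add: gr_mult_single)
  next
    fix g assume "Poly_Mapping.single g 1 \<in> Mset ?G Iu"
    from M_rmult[OF fin this cl[of _ True]] show "Poly_Mapping.single (sl2z_mult g sl2z_u) 1 \<in> Mset ?G Iu"
      by (simp add: gr_mult_single)
  qed
  then have "fg_quotient Iu" by (rule M_all[OF fin])
  moreover have "Iu \<subseteq> gen_ideal (gr_pow (gr_u - gr_one) k)"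
    using ideal_sub[OF pow_in[OF k(2)]] by blast
  ultimately show ?thesis by (rule fg_mono)
qed



definition r0 :: "bool list \<times> wpoly" where "r0 = ([False,False,False,False], [([],(1))])"
definition r1 :: "bool list \<times> wpoly" where "r1 = ([True,False,True,False,True], [([False],(1))])"
definition r2 :: "bool list \<times> wpoly" where "r2 = ([True,True,True,True,True], [([True,True,True,True],(5)), ([True,True,True],(-10)), ([True,True],(10)), ([True],(-5)), ([],(1))])"
definition r3 :: "bool list \<times> wpoly" where "r3 = ([True,False,False], [([False,False,True],(1))])"
definition r4 :: "bool list \<times> wpoly" where "r4 = ([False,True,True,True,True], [([True,False,True,False],(1)), ([False,True,True,True],(5)), ([False,True,True],(-10)), ([False,True],(10)), ([False],(-5))])"
definition r5 :: "bool list \<times> wpoly" where "r5 = ([False,False,False,True,False,True,False], [([True,True,True,True],(1)), ([True,True,True],(-5)), ([True,True],(10)), ([True],(-10)), ([],(5))])"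
definition r6 :: "bool list \<times> wpoly" where "r6 = ([True,True,True,True,False], [([True,True,True,False],(5)), ([False,True,False,True],(1)), ([True,True,False],(-10)), ([True,False],(10)), ([False],(-5))])"
definition r7 :: "bool list \<times> wpoly" where "r7 = ([True,False,True,True,False,True,False], [([True,False,True,False],(5)), ([False,True,True,True],(1)), ([False,True,True],(-5)), ([False,True],(10)), ([False],(-10))])"
definition r8 :: "bool list \<times> wpoly" where "r8 = ([False,False,True,False,True,True,False,True], [([False,True,True,True,False],(1)), ([False,False,True,False,True],(5)), ([False,True,True,False],(-5)), ([False,True,False],(10)), ([False,False],(-10))])"
definition r9 :: "bool list \<times> wpoly" where "r9 = ([False,True,False,True,True,False,True], [([True,True,True,False],(1)), ([False,True,False,True],(5)), ([True,True,False],(-5)), ([True,False],(10)), ([False],(-10))])"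
definition r10 :: "bool list \<times> wpoly" where "r10 = ([False,False,True,True,False,True,True,False,True], [([True,False,True,True,True,False],(1)), ([False,False,True,True,False,True],(5)), ([True,False,True,True,False],(-5)), ([True,False,True,False],(10)), ([False,False,True],(-10))])"
definition r11 :: "bool list \<times> wpoly" where "r11 = ([False,False,False,True,True,True,False], [([True,False,True,True,False,True],(1)), ([False,False,False,True,True,False],(5)), ([False,False,False,True,False],(-10)), ([True,False,True],(-5)), ([],(10))])"
definition r12 :: "bool list \<times> wpoly" where "r12 = ([False,False,True,False,True,True,True,False], [([True,True,False,True,True,False,True],(1)), ([False,False,True,False,True,True,False],(5)), ([False,False,True,False,True,False],(-10)), ([True,True,False,True],(-5)), ([True],(10))])"
definition r13 :: "bool list \<times> wpoly" where "r13 = ([False,False,True,True,False,True,True,True,False], [([True,True,True,False,True,True,False,True],(1)), ([False,False,True,True,False,True,True,False],(5)), ([False,False,True,True,False,True,False],(-10)), ([True,True,True,False,True],(-5)), ([True,True],(10))])"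
definition r14 :: "bool list \<times> wpoly" where "r14 = ([True,False,True,True,False,True,True,False,True], [([True,False,True,True,False,True],(5)), ([False,False,False,True,True,False],(1)), ([False,False,False,True,False],(-5)), ([True,False,True],(-10)), ([],(10))])"
definition r15 :: "bool list \<times> wpoly" where "r15 = ([False,True,False,True,True,True,False,True,False], [([True,True,True,False,True,True,True],(1)), ([True,True,True,False,True,True],(-5)), ([True,True,False,True,True,True],(-5)), ([False,True,True,False,True,False],(5)), ([False,True,False,True,True,False],(5)), ([True,True,True,False,True],(10)), ([True,True,False,True,True],(25)), ([True,False,True,True,True],(10)), ([True,True,True,False],(-10)), ([True,True,False,True],(-50)), ([True,False,True,True],(-50)), ([False,True,True,True],(-10)), ([True,True,False],(50)), ([True,False,True],(100)), ([False,True,True],(50)), ([False,True,False],(-25)), ([True,False],(-100)), ([False,True],(-100)), ([False],(100))])"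
definition r16 :: "bool list \<times> wpoly" where "r16 = ([True,True,False,True,True,False,True,True,False], [([False,True,True,True,False,True,True,True],(1)), ([False,True,True,True,False,True,True],(-5)), ([False,True,True,False,True,True,True],(-5)), ([False,False,True,True,False,True,False],(5)), ([False,False,True,False,True,True,False],(5)), ([True,True,False,True,True,False],(5)), ([False,True,True,True,False,True],(10)), ([False,True,True,False,True,True],(25)), ([False,True,False,True,True,True],(10)), ([False,False,True,False,True,False],(-25)), ([False,False,False,True,True,True],(-5)), ([False,True,True,True,False],(-10)), ([False,True,True,False,True],(-50)), ([False,True,False,True,True],(-50)), ([False,False,True,True,True],(-10)), ([False,False,False,True,True],(25)), ([False,True,True,False],(50)), ([False,True,False,True],(100)), ([False,False,True,True],(50)), ([False,False,True,False],(-25)), ([False,False,False,True],(-50)), ([True,True,False],(-10)), ([False,True,False],(-100)), ([False,False,True],(-100)), ([False,False,False],(50)), ([False,False],(100)), ([],(10))])"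
definition r17 :: "bool list \<times> wpoly" where "r17 = ([False,True,True,False,True,True,False,True,True], [([True,True,True,False,True,True,True,False],(1)), ([True,True,True,False,True,True,False],(-5)), ([True,True,False,True,True,True,False],(-5)), ([False,False,False,True,True,False,True],(5)), ([False,False,False,True,False,True,True],(5)), ([True,True,True,False,True,False],(10)), ([True,True,False,True,True,False],(25)), ([True,False,True,True,True,False],(10)), ([False,True,True,False,True,True],(5)), ([False,False,True,True,True,False],(-5)), ([False,False,False,True,False,True],(-25)), ([True,True,False,True,False],(-50)), ([True,False,True,True,False],(-50)), ([False,True,True,True,False],(-10)), ([False,False,True,True,True],(-10)), ([False,False,True,True,False],(25)), ([True,False,True,False],(100)), ([False,True,True,False],(50)), ([False,False,True,True],(50)), ([False,False,True,False],(-50)), ([False,False,False,True],(-25)), ([False,True,True],(-10)), ([False,True,False],(-100)), ([False,False,True],(-100)), ([False,False,False],(50)), ([False,False],(100)), ([],(10))])"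
definition r18 :: "bool list \<times> wpoly" where "r18 = ([False,True,True,True,False,True,True,True,False], [([False,True,True,True,False,True,True,False],(5)), ([False,True,True,False,True,True,True,False],(5)), ([True,False,True,True,True,False,True],(1)), ([False,True,True,True,False,True,False],(-10)), ([False,True,True,False,True,True,False],(-25)), ([False,True,False,True,True,True,False],(-10)), ([False,True,True,False,True,False],(50)), ([False,True,False,True,True,False],(50)), ([False,False,True,True,True,False],(10)), ([False,False,False,True,True,True],(10)), ([False,True,False,True,False],(-100)), ([False,False,True,True,False],(-50)), ([False,False,False,True,True],(-50)), ([True,True,False,True],(-5)), ([True,False,True,True],(-5)), ([False,False,True,False],(100)), ([False,False,False,True],(100)), ([False,False,False],(-100)), ([True],(25))])"
definition r19 :: "bool list \<times> wpoly" where "r19 = ([False,False,True,True,True,False,True,True,False,True], [([True,True,False,True,True,True,False],(1)), ([False,False,True,True,True,False,True],(5)), ([True,True,False,True,True,False],(-5)), ([True,True,False,True,False],(10)), ([False,False,True,True],(-10))])"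
definition r20 :: "bool list \<times> wpoly" where "r20 = ([True,False,True,True,False,True,True,True,False,True], [([False,True,True,False,True,True,True,False],(1)), ([True,False,True,True,True,False,True],(5)), ([True,False,True,True,False,True,True],(5)), ([False,True,True,False,True,True,False],(-5)), ([False,True,False,True,True,True,False],(-5)), ([False,True,True,False,True,False],(10)), ([False,True,False,True,True,False],(25)), ([False,False,True,True,True,False],(10)), ([False,True,False,True,False],(-50)), ([False,False,True,True,False],(-50)), ([False,False,False,True,True],(-10)), ([True,True,False,True],(-10)), ([True,False,True,True],(-25)), ([False,False,True,False],(100)), ([False,False,False,True],(50)), ([False,False,False],(-100)), ([True],(50))])"
definition r21 :: "bool list \<times> wpoly" where "r21 = ([True,True,True,False,True,True,True,False,True,True], [([False,True,True,False,True,True,True,False,True,False],(1)), ([True,True,True,False,True,True,True,False,True],(5)), ([True,True,True,False,True,True,False,True,True],(5)), ([True,True,False,True,True,True,False,True,True],(5)), ([False,False,False,True,True,False,True,True,True],(-5)), ([True,True,True,False,True,True,True,False],(-10)), ([True,True,True,False,True,True,False,True],(-25)), ([True,True,False,True,True,True,False,True],(-25)), ([True,True,False,True,True,False,True,True],(-25)), ([True,False,True,True,True,False,True,True],(-10)), ([False,True,True,False,True,True,False,True],(10)), ([False,False,True,True,True,False,True,True],(5)), ([False,False,False,True,True,False,True,True],(25)), ([False,False,False,True,True,False,True,False],(-5)), ([False,False,False,True,False,True,True,True],(25)), ([True,True,True,False,True,True,False],(50)), ([True,True,False,True,True,True,False],(50)), ([True,True,False,True,True,False,True],(125)), ([True,False,True,True,True,False,True],(50)),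 ([True,False,True,True,False,True,True],(50)), ([False,True,True,True,False,True,True],(10)), ([False,True,True,True,False,True,False],(-5)), ([False,True,True,False,True,True,False],(-5)), ([False,False,True,True,True,False,True],(-25)), ([False,False,True,True,False,True,True],(-25)), ([False,False,False,True,True,False,True],(-50)), ([False,False,False,True,False,True,True],(-125)), ([True,True,True,False,True,False],(-100)), ([True,True,False,True,True,False],(-250)), ([True,False,True,True,True,False],(-100)), ([True,False,True,True,False,True],(-250)), ([False,True,True,True,False,True],(-50)), ([False,True,True,False,True,True],(-50)), ([False,False,True,True,True,False],(50)), ([False,False,True,True,False,True],(125)), ([False,False,True,False,True,True],(50)), ([False,False,False,True,True,True],(25)), ([False,False,False,True,False,True],(200)), ([True,True,False,True,False],(500)), ([True,False,True,True,False],(500)), ([False,True,True,True,False],(100)), ([False,True,True,False,True],(200)), ([False,True,False,True,True],(100)), ([False,True,False,True,False],(-50)), ([False,False,True,True,True],(100)), ([False,False,True,True,False],(-250)), ([False,False,True,False,True],(-250)), ([False,False,False,True,True],(-175)), ([False,False,False,True,False],(25)), ([True,True,False,True],(-10)), ([True,False,True,False],(-990)), ([False,True,True,False],(-475)), ([False,True,False,True],(-500)), ([False,False,True,True],(-500)), ([False,False,True,False],(500)), ([False,False,False,True],(500)), ([True,True,False],(50)), ([True,False,True],(50)), ([False,True,False],(1000)), ([False,False,True],(950)), ([False,False,False],(-500)), ([True,True],(-10)), ([True,False],(-250)), ([False,False],(-740)), ([True],(50)), ([False],(450)), ([],(-100))])"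
definition r22 :: "bool list \<times> wpoly" where "r22 = ([True,False,True,True,True,False,True,True,False,True], [([False,True,True,True,False,True,True,False],(1)), ([True,True,False,True,True,False,True],(5)), ([True,False,True,True,True,False,True],(5)), ([False,True,True,True,False,True,False],(-5)), ([False,True,True,False,True,True,False],(-5)), ([False,True,True,False,True,False],(25)), ([False,True,False,True,True,False],(10)), ([False,False,False,True,True,True],(10)), ([False,True,False,True,False],(-50)), ([False,False,True,True,False],(-10)), ([False,False,False,True,True],(-50)), ([True,True,False,True],(-25)), ([True,False,True,True],(-10)), ([False,False,True,False],(50)), ([False,False,False,True],(100)), ([False,False,False],(-100)), ([True],(50))])"
definition rl :: "nat \<Rightarrow> bool list \<times> wpoly" where "rl n = (if n = 0 then r0 else if n = 1 then r1 else if n = 2 then r2 else if n = 3 then r3 else if n = 4 then r4 else if n = 5 then r5 else if n = 6 then r6 else if n = 7 then r7 else if n = 8 then r8 else if n = 9 then r9 else if n = 10 then r10 else if n = 11 then r11 else if n = 12 then r12 else if n = 13 then r13 else if n = 14 then r14 else if n = 15 then r15 else if n = 16 then r16 else if n = 17 then r17 else if n = 18 then r18 else if n = 19 then r19 else if n = 20 then r20 else if n = 21 then r21 else r22)"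
definition d3 :: "bool list \<times> nat \<times> nat \<times> nat \<times> nat \<times> int \<times> (nat \<times> nat \<times> nat) list" where "d3 = ([True,False,True,False,True,False,True], 1, 0, 1, 2, (1), [])"
definition d4 :: "bool list \<times> nat \<times> nat \<times> nat \<times> nat \<times> int \<times> (nat \<times> nat \<times> nat) list" where "d4 = ([True,False,True,False,True,True,True,True,True], 1, 0, 2, 4, (-1), [(0,1,0), (0,1,0), (0,1,0), (0,1,0)])"
definition d5 :: "bool list \<times> nat \<times> nat \<times> nat \<times> nat \<times> int \<times> (nat \<times> nat \<times> nat) list" where "d5 = ([False,False,False,False,True,True,True,True], 0, 0, 4, 3, (1), [(1,0,0), (1,0,0), (1,0,0), (2,0,0)])"
definition d6 :: "bool list \<times> nat \<times> nat \<times> nat \<times> nat \<times> int \<times> (nat \<times> nat \<times> nat) list" where "d6 = ([False,False,False,True,False,True,False,False], 5, 0, 3, 5, (-1), [(0,3,3), (0,0,0)])"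
definition d7 :: "bool list \<times> nat \<times> nat \<times> nat \<times> nat \<times> int \<times> (nat \<times> nat \<times> nat) list" where "d7 = ([True,False,True,False,True,True,True,True], 1, 0, 4, 3, (1), [(1,1,0), (1,1,0), (1,1,0)])"
definition d8 :: "bool list \<times> nat \<times> nat \<times> nat \<times> nat \<times> int \<times> (nat \<times> nat \<times> nat) list" where "d8 = ([True,False,True,True,False,True,False,False], 7, 0, 3, 5, (1), [(0,3,3), (0,3,2), (0,3,0), (1,3,2), (1,3,0)])"
definition d9 :: "bool list \<times> nat \<times> nat \<times> nat \<times> nat \<times> int \<times> (nat \<times> nat \<times> nat) list" where "d9 = ([True,True,True,True,False,True,False,True], 6, 0, 1, 3, (-1), [(0,1,2), (1,1,1), (1,1,0)])"
definition d10 :: "bool list \<times> nat \<times> nat \<times> nat \<times> nat \<times> int \<times> (nat \<times> nat \<times> nat) list" where "d10 = ([True,False,False,True,False,True,True,False,True], 3, 0, 8, 1, (-1), [(2,3,0), (5,3,0)])"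
definition d11 :: "bool list \<times> nat \<times> nat \<times> nat \<times> nat \<times> int \<times> (nat \<times> nat \<times> nat) list" where "d11 = ([False,False,False,False,True,False,True,True,False,True], 0, 0, 8, 2, (1), [(1,0,0), (4,0,0)])"
definition d12 :: "bool list \<times> nat \<times> nat \<times> nat \<times> nat \<times> int \<times> (nat \<times> nat \<times> nat) list" where "d12 = ([True,False,False,False,True,True,True,False], 3, 0, 11, 1, (-1), [(2,3,0), (3,3,0)])"
definition d13 :: "bool list \<times> nat \<times> nat \<times> nat \<times> nat \<times> int \<times> (nat \<times> nat \<times> nat) list" where "d13 = ([True,False,False,True,False,True,True,True,False], 3, 0, 12, 1, (-1), [(2,3,0), (3,3,0)])"
definition d14 :: "bool list \<times> nat \<times> nat \<times> nat \<times> nat \<times> int \<times> (nat \<times> nat \<times> nat) list" where "d14 = ([False,False,False,True,True,True,False,True,False,True], 11, 0, 1, 5, (-1), [(1,1,4), (1,1,3), (4,0,0)])"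
definition d15 :: "bool list \<times> nat \<times> nat \<times> nat \<times> nat \<times> int \<times> (nat \<times> nat \<times> nat) list" where "d15 = ([False,True,False,True,True,False,True,True,True,True], 9, 0, 4, 5, (1), [(1,9,0), (1,9,0), (2,4,2), (2,9,0)])"
definition d16 :: "bool list \<times> nat \<times> nat \<times> nat \<times> nat \<times> int \<times> (nat \<times> nat \<times> nat) list" where "d16 = ([False,False,True,False,True,True,True,False,True,False], 12, 0, 15, 1, (-1), [(1,7,2), (2,1,2), (22,0,0)])"
definition d17 :: "bool list \<times> nat \<times> nat \<times> nat \<times> nat \<times> int \<times> (nat \<times> nat \<times> nat) list" where "d17 = ([False,True,False,True,True,True,False,True,False,False], 15, 0, 3, 7, (1), [(0,3,5), (0,3,4), (0,3,3), (0,3,1), (0,12,1), (1,8,1), (2,1,3), (4,3,4), (4,3,2), (4,3,4), (4,3,3), (4,3,1), (4,3,1), (12,3,2), (13,3,1), (14,3,0), (17,3,1), (18,3,0), (19,3,1), (22,0,0), (22,3,0)])"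
definition d18 :: "bool list \<times> nat \<times> nat \<times> nat \<times> nat \<times> int \<times> (nat \<times> nat \<times> nat) list" where "d18 = ([False,False,True,True,False,True,True,False,True,True], 10, 0, 17, 1, (1), [(3,0,0), (3,0,0), (7,11,0), (7,0,0), (11,1,0), (14,0,0), (18,0,0)])"
definition d19 :: "bool list \<times> nat \<times> nat \<times> nat \<times> nat \<times> int \<times> (nat \<times> nat \<times> nat) list" where "d19 = ([True,False,False,True,True,False,True,True,False,True], 3, 0, 10, 1, (-1), [(2,3,0), (5,3,0)])"
definition d20 :: "bool list \<times> nat \<times> nat \<times> nat \<times> nat \<times> int \<times> (nat \<times> nat \<times> nat) list" where "d20 = ([False,False,False,True,True,True,False,True,True,False,True], 11, 0, 19, 1, (-1), [(1,10,1), (1,8,1), (2,11,0)])"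
definition d21 :: "bool list \<times> nat \<times> nat \<times> nat \<times> nat \<times> int \<times> (nat \<times> nat \<times> nat) list" where "d21 = ([False,True,True,False,True,True,False,True,True,True,True], 17, 0, 4, 6, (-1), [(2,17,0), (5,17,0), (6,4,4), (8,1,2), (11,4,3), (17,1,2), (19,1,1), (24,2,2), (30,1,1), (32,1,0), (34,4,1), (41,1,0), (41,4,0)])"
definition d22 :: "bool list \<times> nat \<times> nat \<times> nat \<times> nat \<times> int \<times> (nat \<times> nat \<times> nat) list" where "d22 = ([True,False,False,False,True,True,False,True,True,True,False], 3, 0, 13, 2, (1), [(0,8,0), (1,3,0), (1,8,0), (1,3,0), (1,7,2), (2,12,0)])"
definition dv :: "nat \<Rightarrow> bool list \<times> nat \<times> nat \<times> nat \<times> nat \<times> int \<times> (nat \<times> nat \<times> nat) list" where "dv n = (if n = 3 then d3 else if n = 4 then d4 else if n = 5 then d5 else if n = 6 then d6 else if n = 7 then d7 else if n = 8 then d8 else if n = 9 then d9 else if n = 10 then d10 else if n = 11 then d11 else if n = 12 then d12 else if n = 13 then d13 else if n = 14 then d14 else if n = 15 then d15 else if n = 16 then d16 else if n = 17 then d17 else if n = 18 then d18 else if n = 19 then d19 else if n = 20 then d20 else if n = 21 then d21 else d22)"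
lemma dchk: "list_all (\<lambda>n. dcheck rl n (dv n)) [3..<23]" by code_simp
definition Wl :: "bool list list" where "Wl = [[], [False], [True], [False,False], [False,True], [True,False], [True,True], [False,False,False], [False,False,True], [False,True,False], [False,True,True], [True,False,True], [True,True,False], [True,True,True], [False,False,False,True], [False,False,True,False], [False,False,True,True], [False,True,False,True], [False,True,True,False], [False,True,True,True], [True,False,True,False], [True,False,True,True], [True,True,False,True], [True,True,True,False], [True,True,True,True], [False,False,False,True,False], [False,False,False,True,True], [False,False,True,False,True], [False,False,True,True,False], [False,False,True,True,True], [False,True,False,True,False], [False,True,False,True,True], [False,True,True,False,True], [False,True,True,True,False], [True,False,True,True,False], [True,False,True,True,True], [True,True,False,True,False], [True,True,False,True,True], [True,True,True,False,True], [False,False,False,True,False,True], [False,False,False,True,True,False], [False,False,False,True,True,True], [False,False,True,False,True,False], [False,False,True,False,True,True], [False,False,True,True,False,True], [False,False,True,True,True,False], [False,True,False,True,True,False], [False,True,False,True,True,True], [False,True,True,False,True,False], [False,True,True,False,True,True], [False,True,True,True,False,True], [True,False,True,True,False,True], [True,False,True,True,True,False], [True,True,False,True,True,False], [True,True,False,True,True,True], [True,True,True,False,True,False], [True,True,True,False,True,True], [False,False,False,True,False,True,True], [False,False,False,True,True,False,True], [False,False,True,False,True,True,False], [False,False,True,False,True,True,True], [False,False,True,True,False,True,False], [False,False,True,True,False,True,True], [False,False,True,True,True,False,True], [False,True,False,True,True,True,False], [False,True,True,False,True,True,False], [False,True,True,False,True,True,True], [False,True,True,True,False,True,False], [False,True,True,True,False,True,True],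 [True,False,True,True,False,True,True], [True,False,True,True,True,False,True], [True,True,False,True,True,False,True], [True,True,False,True,True,True,False], [True,True,True,False,True,True,False], [True,True,True,False,True,True,True], [False,False,False,True,False,True,True,False], [False,False,False,True,False,True,True,True], [False,False,False,True,True,False,True,False], [False,False,False,True,True,False,True,True], [False,False,True,True,False,True,True,False], [False,False,True,True,False,True,True,True], [False,False,True,True,True,False,True,False], [False,False,True,True,True,False,True,True], [False,True,False,True,True,True,False,True], [False,True,True,False,True,True,False,True], [False,True,True,False,True,True,True,False], [False,True,True,True,False,True,True,False], [False,True,True,True,False,True,True,True], [True,False,True,True,False,True,True,False], [True,False,True,True,False,True,True,True], [True,False,True,True,True,False,True,False], [True,False,True,True,True,False,True,True], [True,True,False,True,True,False,True,True], [True,True,False,True,True,True,False,True], [True,True,True,False,True,True,False,True], [True,True,True,False,True,True,True,False], [False,False,False,True,True,False,True,True,False], [False,False,False,True,True,False,True,True,True], [False,False,True,True,True,False,True,True,False], [False,False,True,True,True,False,True,True,True], [False,True,False,True,True,True,False,True,True], [False,True,True,False,True,True,True,False,True], [False,True,True,True,False,True,True,False,True], [True,False,True,True,False,True,True,True,False], [True,False,True,True,True,False,True,True,False], [True,False,True,True,True,False,True,True,True], [True,True,False,True,True,False,True,True,True], [True,True,False,True,True,True,False,True,False], [True,True,False,True,True,True,False,True,True], [True,True,True,False,True,True,False,True,True], [True,True,True,False,True,True,True,False,True], [False,True,False,True,True,True,False,True,True,False], [False,True,False,True,True,True,False,True,True,True], [False,True,True,False,True,True,True,False,True,False], [False,True,True,False,True,True,True,False,True,True],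 [False,True,True,True,False,True,True,False,True,True], [True,True,False,True,True,False,True,True,True,False], [True,True,False,True,True,True,False,True,True,False], [True,True,False,True,True,True,False,True,True,True], [True,True,True,False,True,True,False,True,True,True], [True,True,True,False,True,True,True,False,True,False], [False,True,True,False,True,True,True,False,True,True,False], [False,True,True,False,True,True,True,False,True,True,True], [False,True,True,True,False,True,True,False,True,True,True], [True,True,True,False,True,True,False,True,True,True,False], [False,True,True,True,False,True,True,False,True,True,True,False]]"
lemma Wl_len: "length Wl = 126" by (simp add: Wl_def)
lemma Wl_nil: "[] \<in> set Wl" by (simp add: Wl_def)
definition tg0 :: "(((nat \<times> nat \<times> nat) list \<times> (nat \<times> int) list) \<times> ((nat \<times> nat \<times> nat) list \<times> (nat \<times> int) list)) list" where "tg0 = [(([], [(1,(1))]), ([], [(2,(1))])), (([], [(3,(1))]), ([], [(4,(1))])), (([], [(5,(1))]), ([], [(6,(1))])), (([], [(7,(1))]), ([], [(8,(1))])), (([], [(9,(1))]), ([], [(10,(1))])), (([(0,3,0)], [(8,(1))]), ([], [(11,(1))])), (([], [(12,(1))]), ([], [(13,(1))])), (([(0,0,0)], [(0,(1))]), ([], [(14,(1))])), (([], [(15,(1))]), ([], [(16,(1))])), (([(0,3,1)], [(14,(1))]), ([], [(17,(1))])), (([], [(18,(1))]), ([], [(19,(1))])), (([], [(20,(1))]), ([], [(21,(1))])), (([(0,3,1), (0,3,0)], [(16,(1))]), ([], [(22,(1))])), (([], [(23,(1))]), ([], [(24,(1))])), (([], [(25,(1))]), ([], [(26,(1))])), (([(0,3,2),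 (0,0,0)], [(2,(1))]), ([], [(27,(1))])), (([], [(28,(1))]), ([], [(29,(1))])), (([], [(30,(1))]), ([], [(31,(1))])), (([(0,3,2), (0,3,1)], [(26,(1))]), ([], [(32,(1))])), (([], [(33,(1))]), ([(0,4,0)], [(20,(1)), (19,(5)), (10,(-10)), (4,(10)), (1,(-5))]))]"
definition tg1 :: "(((nat \<times> nat \<times> nat) list \<times> (nat \<times> int) list) \<times> ((nat \<times> nat \<times> nat) list \<times> (nat \<times> int) list)) list" where "tg1 = [(([(0,3,2), (0,3,0)], [(27,(1))]), ([(0,1,0)], [(1,(1))])), (([], [(34,(1))]), ([], [(35,(1))])), (([], [(36,(1))]), ([], [(37,(1))])), (([(0,3,2), (0,3,1), (0,3,0)], [(29,(1))]), ([], [(38,(1))])), (([(0,6,0)], [(23,(5)), (17,(1)), (12,(-10)), (5,(10)), (1,(-5))]), ([(0,2,0)], [(24,(5)), (13,(-10)), (6,(10)), (2,(-5)), (0,(1))])), (([(0,3,3), (0,0,0)], [(4,(1))]), ([], [(39,(1))])), (([], [(40,(1))]), ([], [(41,(1))])), (([], [(42,(1))]), ([], [(43,(1))])), (([(0,3,3), (0,3,2), (0,0,0)], [(6,(1))]), ([], [(44,(1))])), (([], [(45,(1))]), ([(0,4,1)], [(30,(1)), (29,(5)), (16,(-10)), (8,(10)), (3,(-5))])), (([(0,3,3), (0,3,1)], [(39,(1))]), ([(0,1,1)], [(3,(1))])), (([], [(46,(1))]), ([], [(47,(1))])), (([], [(48,(1))]), ([], [(49,(1))])), (([(0,3,3),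 (0,3,2), (0,3,1)], [(41,(1))]), ([], [(50,(1))])), (([(0,3,3), (0,3,2), (0,3,0)], [(43,(1))]), ([], [(51,(1))])), (([], [(52,(1))]), ([(0,4,1)], [(36,(1)), (35,(5)), (21,(-10)), (11,(10)), (5,(-5))])), (([(0,3,3), (0,3,1), (0,3,0)], [(44,(1))]), ([(0,1,1)], [(5,(1))])), (([], [(53,(1))]), ([], [(54,(1))])), (([], [(55,(1))]), ([], [(56,(1))])), (([(0,5,0)], [(24,(1)), (13,(-5)), (6,(10)), (2,(-10)), (0,(5))]), ([], [(57,(1))]))]"
definition tg2 :: "(((nat \<times> nat \<times> nat) list \<times> (nat \<times> int) list) \<times> ((nat \<times> nat \<times> nat) list \<times> (nat \<times> int) list)) list" where "tg2 = [(([(0,3,4), (0,3,3), (0,0,0)], [(10,(1))]), ([], [(58,(1))])), (([(0,11,0)], [(51,(1)), (40,(5)), (25,(-10)), (11,(-5)), (0,(10))]), ([(0,4,2)], [(42,(1)), (41,(5)), (26,(-10)), (14,(10)), (7,(-5))])), (([(0,3,4), (0,3,2), (0,0,0)], [(11,(1))]), ([(0,1,2)], [(7,(1))])), (([], [(59,(1))]), ([], [(60,(1))])), (([], [(61,(1))]), ([], [(62,(1))])), (([(0,3,4), (0,3,3), (0,3,2), (0,0,0)], [(13,(1))]), ([], [(63,(1))])), (([(0,3,4), (0,3,3), (0,3,1)], [(57,(1))]), ([(0,9,0)], [(23,(1)), (17,(5)), (12,(-5)), (5,(10)), (1,(-10))])), (([], [(64,(1))]), ([(0,4,2)], [(48,(1)),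 (47,(5)), (31,(-10)), (17,(10)), (9,(-5))])), (([(0,3,4), (0,3,2), (0,3,1)], [(58,(1))]), ([(0,1,2)], [(9,(1))])), (([], [(65,(1))]), ([], [(66,(1))])), (([], [(67,(1))]), ([], [(68,(1))])), (([(0,7,0)], [(20,(5)), (19,(1)), (10,(-5)), (4,(10)), (1,(-10))]), ([], [(69,(1))])), (([(0,3,4), (0,3,3), (0,3,2), (0,3,0)], [(60,(1))]), ([], [(70,(1))])), (([(0,3,4), (0,3,3), (0,3,1), (0,3,0)], [(62,(1))]), ([], [(71,(1))])), (([], [(72,(1))]), ([(0,4,2)], [(55,(1)), (54,(5)), (37,(-10)), (22,(10)), (12,(-5))])), (([(0,3,4), (0,3,2), (0,3,1), (0,3,0)], [(63,(1))]), ([(0,1,2)], [(12,(1))])), (([], [(73,(1))]), ([], [(74,(1))])), (([], [(75,(1))]), ([], [(76,(1))])), (([], [(77,(1))]), ([], [(78,(1))])), (([(0,3,5), (0,3,4), (0,3,2), (0,0,0)], [(21,(1))]), ([(0,8,0)], [(33,(1)), (27,(5)), (18,(-5)), (9,(10)), (3,(-10))]))]"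
definition tg3 :: "(((nat \<times> nat \<times> nat) list \<times> (nat \<times> int) list) \<times> ((nat \<times> nat \<times> nat) list \<times> (nat \<times> int) list)) list" where "tg3 = [(([(0,12,0)], [(71,(1)), (59,(5)), (42,(-10)), (22,(-5)), (2,(10))]), ([(0,4,3)], [(61,(1)), (60,(5)), (43,(-10)), (27,(10)), (15,(-5))])), (([(0,3,5), (0,3,3), (0,3,2), (0,0,0)], [(22,(1))]), ([(0,1,3)], [(15,(1))])), (([], [(79,(1))]), ([], [(80,(1))])), (([], [(81,(1))]), ([], [(82,(1))])), (([(0,3,5), (0,3,4), (0,3,3), (0,3,1)], [(76,(1))]), ([], [(83,(1))])), (([(0,3,5), (0,3,4), (0,3,2), (0,3,1)], [(78,(1))]), ([], [(84,(1))])), (([], [(85,(1))]), ([(0,4,3)], [(67,(1)), (66,(5)), (49,(-10)), (32,(10)), (18,(-5))])), (([(0,3,5), (0,3,3), (0,3,2), (0,3,1), (0,11,0)], [(69,(1)), (58,(5)), (39,(-10)), (21,(-5)), (2,(10))]), ([(0,1,3)], [(18,(1))])), (([], [(86,(1))]), ([], [(87,(1))])), (([], [(88,(1))]), ([], [(89,(1))])), (([], [(90,(1))]), ([], [(91,(1))])), (([(0,7,1)], [(36,(5)), (35,(1)), (21,(-5)), (11,(10)), (5,(-10))]), ([], [(92,(1))])), (([(0,3,5), (0,3,4), (0,3,3), (0,3,1), (0,3,0)], [(80,(1))]), ([], [(93,(1))])), (([(0,3,5), (0,3,4), (0,3,2), (0,3,1), (0,3,0)], [(82,(1))]), ([], [(94,(1))])),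 (([], [(95,(1))]), ([(0,4,3), (0,6,0)], [(74,(5)), (56,(-10)), (55,(5)), (46,(1)), (38,(10)), (36,(-10)), (23,(-5)), (20,(10)), (9,(-5))])), (([(0,3,6), (0,3,5), (0,3,3), (0,0,0)], [(31,(1))]), ([(0,8,1)], [(45,(1)), (39,(5)), (28,(-5)), (15,(10)), (7,(-10))])), (([(0,12,1), (2,5,0)], [(84,(1)), (75,(5)), (32,(-5)), (24,(-10)), (13,(50)), (6,(-100)), (4,(10)), (2,(100)), (0,(-50))]), ([(0,4,4)], [(77,(1)), (76,(5)), (57,(-10)), (39,(10)), (25,(-5))])), (([(0,3,6), (0,3,4), (0,3,3), (0,0,0)], [(32,(1))]), ([(0,1,4)], [(25,(1))])), (([], [(96,(1))]), ([], [(97,(1))])), (([(0,3,6), (0,3,5), (0,3,3), (0,3,2), (0,0,0)], [(37,(1))]), ([(0,10,0)], [(52,(1)), (44,(5)), (34,(-5)), (20,(10)), (8,(-10))]))]"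
definition tg4 :: "(((nat \<times> nat \<times> nat) list \<times> (nat \<times> int) list) \<times> ((nat \<times> nat \<times> nat) list \<times> (nat \<times> int) list)) list" where "tg4 = [(([(0,13,0)], [(94,(1)), (79,(5)), (61,(-10)), (38,(-5)), (6,(10))]), ([(0,4,4)], [(81,(1)), (80,(5)), (62,(-10)), (44,(10)), (28,(-5))])), (([(0,3,6), (0,3,4), (0,3,3), (0,3,2), (0,0,0)], [(38,(1))]), ([(0,1,4)], [(28,(1))])), (([], [(98,(1))]), ([], [(99,(1))])), (([(0,15,0)], [(74,(1)), (56,(-5)), (54,(-5)), (48,(5)), (46,(5)), (38,(10)), (37,(25)), (35,(10)), (23,(-10)), (22,(-50)), (21,(-50)), (19,(-10)), (12,(50)), (11,(100)), (10,(50)), (9,(-25)), (5,(-100)), (4,(-100)), (1,(100))]), ([], [(100,(1))])), (([(0,7,2)], [(48,(5)), (47,(1)), (31,(-5)), (17,(10)), (9,(-10))]), ([(0,17,0)], [(95,(1)), (73,(-5)), (72,(-5)), (58,(5)), (57,(5)), (55,(10)), (53,(25)), (52,(10)), (49,(5)), (45,(-5)), (39,(-25)), (36,(-50)), (34,(-50)), (33,(-10)), (29,(-10)), (28,(25)), (20,(100)), (18,(50)), (16,(50)), (15,(-50)), (14,(-25)), (10,(-10)), (9,(-100)), (8,(-100)), (7,(50)), (3,(100)), (0,(10))])), (([(0,3,6), (0,3,5), (0,3,4), (0,3,2), (0,3,1)], [(97,(1))]), ([], [(101,(1))])), (([(0,3,6), (0,3,5), (0,3,3), (0,3,2), (0,3,1),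 (0,11,0)], [(89,(1)), (78,(5)), (57,(-10)), (35,(-5)), (6,(10))]), ([], [(102,(1))])), (([(0,18,0)], [(86,(5)), (85,(5)), (70,(1)), (67,(-10)), (65,(-25)), (64,(-10)), (48,(50)), (46,(50)), (45,(10)), (41,(10)), (30,(-100)), (28,(-50)), (26,(-50)), (22,(-5)), (21,(-5)), (15,(100)), (14,(100)), (7,(-100)), (2,(25))]), ([(0,4,4), (0,4,0), (1,3,2), (1,3,0)], [(87,(5)), (68,(-10)), (67,(5)), (59,(1)), (50,(10)), (48,(-10)), (33,(-5)), (30,(10)), (15,(-5))])), (([(0,3,6), (0,3,5), (0,3,3), (0,3,2), (0,3,0), (0,8,0)], [(50,(1)), (43,(5)), (32,(-5)), (17,(10)), (8,(-10))]), ([(0,14,0)], [(51,(5)), (40,(1)), (25,(-5)), (11,(-10)), (0,(10))])), (([], [(103,(1))]), ([(0,4,4)], [(90,(1)), (89,(5)), (69,(-10)), (51,(10)), (34,(-5))])), (([(0,3,6), (0,3,4), (0,3,3), (0,3,2), (0,3,0), (0,12,0), (1,8,0), (1,1,2)], [(92,(1)), (37,(-5)), (33,(5)), (27,(25)), (18,(-25)), (9,(50)), (7,(-10)), (6,(10)), (3,(-50))]), ([(0,1,4)], [(34,(1))])), (([], [(104,(1))]), ([], [(105,(1))])), (([(0,16,0)], [(87,(1)), (68,(-5)), (66,(-5)), (61,(5)), (59,(5)), (53,(5)), (50,(10)), (49,(25)), (47,(10)), (42,(-25)), (41,(-5)), (33,(-10)), (32,(-50)), (31,(-50)), (29,(-10)),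 (26,(25)), (18,(50)), (17,(100)), (16,(50)), (15,(-25)), (14,(-50)), (12,(-10)), (9,(-100)), (8,(-100)), (7,(50)), (3,(100)), (0,(10))]), ([], [(106,(1))])), (([], [(107,(1))]), ([], [(108,(1))])), (([(0,7,2)], [(55,(5)), (54,(1)), (37,(-5)), (22,(10)), (12,(-10))]), ([], [(109,(1))])), (([(0,3,6), (0,3,5), (0,3,4), (0,3,2), (0,3,1), (0,3,0)], [(99,(1))]), ([], [(110,(1))])), (([(0,3,7), (0,3,6), (0,3,4), (0,3,3), (0,0,0)], [(49,(1))]), ([(0,10,1)], [(64,(1)), (58,(5)), (46,(-5)), (30,(10)), (14,(-10))])), (([(0,13,1)], [(102,(1)), (96,(5)), (77,(-10)), (50,(-5)), (10,(10))]), ([(0,4,5), (0,11,0), (5,5,0)], [(97,(5)), (88,(1)), (78,(-10)), (77,(5)), (58,(10)), (40,(-5)), (34,(-5)), (24,(-10)), (13,(50)), (6,(-100)), (5,(10)), (2,(100)), (0,(-50))])), (([(0,3,7), (0,3,6), (0,3,4), (0,3,3), (0,3,2), (0,0,0)], [(56,(1))]), ([(0,19,0)], [(72,(1)), (63,(5)), (53,(-5)), (36,(10)), (16,(-10))])), (([(0,18,1), (1,13,0), (4,12,0), (5,11,0), (5,0,0), (6,0,0), (9,0,0), (10,0,0)], [(98,(5)), (94,(5)), (83,(1)), (81,(-10)), (71,(-10)), (51,(10)), (38,(-25)), (32,(-5)), (31,(-5)), (22,(50)), (13,(10)), (11,(-50)), (4,(25))]), ([(0,4,5), (0,4,1), (1,3,3),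 (1,3,1)], [(99,(5)), (82,(-10)), (81,(5)), (75,(1)), (63,(10)), (61,(-10)), (45,(-5)), (42,(10)), (25,(-5))]))]"
definition tg5 :: "(((nat \<times> nat \<times> nat) list \<times> (nat \<times> int) list) \<times> ((nat \<times> nat \<times> nat) list \<times> (nat \<times> int) list)) list" where "tg5 = [(([], [(111,(1))]), ([], [(112,(1))])), (([], [(113,(1))]), ([], [(114,(1))])), (([(0,7,3)], [(67,(5)), (66,(1)), (49,(-5)), (32,(10)), (18,(-10))]), ([], [(115,(1))])), (([(0,3,7), (0,3,6), (0,3,5), (0,3,3), (0,3,2), (0,3,0), (0,8,0)], [(68,(1)), (60,(5)), (49,(-5)), (31,(10)), (16,(-10))]), ([(0,20,0)], [(85,(1)), (70,(5)), (69,(5)), (65,(-5)), (64,(-5)), (48,(10)), (46,(25)), (45,(10)), (30,(-50)), (28,(-50)), (26,(-10)), (22,(-10)), (21,(-25)), (15,(100)), (14,(50)), (7,(-100)), (2,(50))])), (([(0,3,7), (0,3,6), (0,3,4), (0,3,3), (0,3,2), (0,3,0), (0,12,0), (1,8,0), (1,1,2)], [(106,(1)), (54,(-5)), (50,(5)), (43,(25)), (32,(-25)), (17,(50)), (14,(-10)), (13,(10)), (8,(-50))]), ([(0,22,0)], [(86,(1)), (71,(5)), (70,(5)), (67,(-5)), (65,(-5)), (48,(25)), (46,(10)), (41,(10)), (30,(-50)), (28,(-10)), (26,(-50)), (22,(-25)), (21,(-10)), (15,(50)), (14,(100)), (7,(-100)), (2,(50))])), (([(0,18,1), (5,1,0),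 (5,7,0), (5,1,0), (5,3,0), (5,3,0), (5,4,1), (6,1,0), (6,3,0), (6,3,0), (6,3,3), (6,3,1), (10,3,0), (10,3,0), (12,3,0)], [(104,(5)), (103,(5)), (93,(1)), (90,(-10)), (88,(-25)), (60,(10)), (43,(-50)), (39,(10)), (38,(-5)), (37,(-5)), (27,(100)), (20,(250)), (19,(50)), (18,(-10)), (10,(-250)), (9,(50)), (7,(-50)), (6,(25)), (4,(500)), (3,(-100)), (1,(-500))]), ([(0,4,5), (0,4,1), (1,3,3), (1,3,1), (3,3,0), (5,7,0), (6,1,0), (6,3,0)], [(105,(5)), (91,(-10)), (90,(5)), (79,(1)), (70,(10)), (52,(-5)), (28,(-5)), (20,(-50)), (19,(-10)), (10,(50)), (4,(-100)), (3,(10)), (1,(100))])), (([], [(116,(1))]), ([(0,4,5)], [(107,(1)), (106,(5)), (92,(-10)), (71,(10)), (53,(-5))])), (([(0,3,7), (0,3,5), (0,3,4), (0,3,3), (0,3,1), (0,3,0), (0,13,0), (1,10,0), (1,1,3)], [(109,(1)), (56,(-5)), (52,(5)), (44,(25)), (34,(-25)), (20,(50)), (15,(-10)), (13,(10)), (8,(-50))]), ([(0,1,5)], [(53,(1))])), (([], [(117,(1))]), ([], [(118,(1))])), (([(0,16,1), (3,3,0), (3,3,0), (8,1,0), (8,3,0), (8,3,0), (12,1,0), (12,3,0), (12,3,0), (12,4,1), (14,1,0), (14,3,0), (14,3,0), (14,3,0), (19,3,0), (19,3,0), (20,3,0)], [(105,(1)), (91,(-5)), (89,(-5)), (81,(5)),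 (79,(5)), (73,(5)), (70,(10)), (69,(25)), (61,(-25)), (60,(-5)), (52,(-10)), (51,(-50)), (43,(25)), (34,(50)), (30,(-10)), (28,(-25)), (27,(-50)), (23,(-10)), (20,(-100)), (15,(50)), (10,(10)), (4,(-50)), (3,(50)), (2,(10)), (1,(100))]), ([], [(119,(1))])), (([], [(120,(1))]), ([(0,21,0)], [(113,(1)), (110,(5)), (109,(5)), (108,(5)), (97,(-5)), (95,(-10)), (94,(-25)), (93,(-25)), (92,(-25)), (91,(-10)), (84,(10)), (82,(5)), (78,(25)), (77,(-5)), (76,(25)), (73,(50)), (72,(50)), (71,(125)), (70,(50)), (69,(50)), (68,(10)), (67,(-5)), (65,(-5)), (63,(-25)), (62,(-25)), (58,(-50)), (57,(-125)), (55,(-100)), (53,(-250)), (52,(-100)), (51,(-250)), (50,(-50)), (49,(-50)), (45,(50)), (44,(125)), (43,(50)), (41,(25)), (39,(200)), (36,(500)), (34,(500)), (33,(100)), (32,(200)), (31,(100)), (30,(-50)), (29,(100)), (28,(-250)), (27,(-250)), (26,(-175)), (25,(25)), (22,(-10)), (20,(-990)), (18,(-475)), (17,(-500)), (16,(-500)), (15,(500)), (14,(500)), (12,(50)), (11,(50)), (9,(1000)), (8,(950)), (7,(-500)), (6,(-10)), (5,(-250)), (3,(-740)), (2,(50)), (1,(450)), (0,(-100))])), (([(0,3,8), (0,3,7), (0,3,5), (0,3,4), (0,3,3), (0,3,1), (0,12,1), (0,17,0), (0,8,1), (1,1,3), (5,1,2), (7,1,1), (9,4,1), (9,1,0), (12,0,0)],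 [(110,(1)), (94,(-5)), (93,(-5)), (78,(5)), (76,(5)), (71,(25)), (70,(10)), (51,(-50)), (50,(-10)), (32,(50)), (30,(-10)), (26,(-25)), (17,(-100)), (12,(10)), (5,(-50)), (3,(50)), (1,(100))]), ([(0,22,1), (7,0,0), (9,0,0), (12,0,0), (12,0,0)], [(98,(1)), (84,(5)), (83,(5)), (81,(-5)), (79,(-5)), (61,(25)), (59,(10)), (42,(-50)), (40,(-10)), (32,(-25)), (31,(-10)), (25,(50)), (13,(10)), (6,(-50)), (4,(50)), (2,(100)), (0,(-100))])), (([(0,18,2), (1,9,0), (2,15,0), (2,9,0), (2,1,1), (2,7,1), (2,1,1), (2,3,1), (2,3,1), (2,4,2), (6,1,1), (6,3,1), (6,3,1), (6,3,4), (6,3,2), (7,0,0), (15,3,1), (15,3,1), (22,3,1), (32,0,0)], [(111,(5)), (101,(1)), (76,(10)), (74,(-10)), (73,(5)), (64,(25)), (57,(-50)), (56,(50)), (55,(-25)), (54,(50)), (53,(-25)), (50,(-5)), (49,(-5)), (48,(-50)), (46,(-175)), (39,(100)), (38,(-100)), (37,(-250)), (36,(125)), (35,(-100)), (34,(50)), (30,(250)), (29,(50)), (28,(-10)), (23,(100)), (22,(500)), (21,(500)), (20,(-250)), (19,(100)), (18,(-50)), (16,(-250)), (15,(50)), (12,(-500)), (11,(-990)), (10,(-475)), (9,(500)), (8,(500)), (7,(-100)), (5,(1000)), (4,(1000)), (3,(-500)), (1,(-1000)), (0,(-50))]), ([(0,4,6), (0,4,2), (1,3,4), (1,3,2), (2,15,0),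 (2,3,1), (4,7,1), (6,1,1), (10,3,1)], [(112,(5)), (100,(-10)), (96,(1)), (83,(10)), (74,(5)), (64,(-5)), (56,(-25)), (54,(-25)), (48,(25)), (46,(25)), (40,(-5)), (38,(50)), (37,(125)), (35,(50)), (30,(-50)), (29,(-10)), (23,(-50)), (22,(-250)), (21,(-250)), (19,(-50)), (16,(50)), (12,(250)), (11,(500)), (10,(250)), (9,(-125)), (8,(-100)), (7,(10)), (5,(-500)), (4,(-500)), (3,(100)), (1,(500))])), (([(0,3,8), (0,3,6), (0,3,5), (0,3,4), (0,3,2), (0,3,1), (0,13,1), (1,10,1), (1,1,4)], [(115,(1)), (68,(-5)), (64,(5)), (58,(25)), (46,(-25)), (30,(50)), (25,(-10)), (19,(10)), (14,(-50))]), ([(0,1,6)], [(65,(1))])), (([], [(121,(1))]), ([], [(122,(1))])), (([(0,16,2), (2,9,0), (2,3,1), (2,3,1), (2,11,0), (6,9,0), (6,1,1), (6,3,1), (6,3,1), (8,9,0), (8,1,1), (8,3,1), (8,3,1), (8,4,2), (9,5,0), (12,1,1), (12,3,1), (12,3,1), (12,3,1), (21,3,1), (21,3,1), (27,3,1)], [(112,(1)), (100,(-5)), (96,(5)), (88,(5)), (86,(5)), (83,(10)), (76,(-5)), (64,(-10)), (57,(25)), (56,(-5)), (47,(-25)), (46,(50)), (42,(-10)), (40,(-25)), (39,(-50)), (38,(25)), (37,(25)), (34,(-25)), (33,(-10)), (31,(125)), (30,(-100)), (25,(50)), (24,(-50)), (23,(-50)), (22,(-125)), (21,(-50)), (17,(-250)),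 (16,(10)), (13,(250)), (12,(250)), (11,(250)), (10,(50)), (8,(-50)), (7,(50)), (6,(-500)), (5,(-450)), (4,(-240)), (3,(100)), (2,(500)), (1,(500)), (0,(-250))]), ([], [(123,(1))])), (([(0,3,8), (0,3,7), (0,3,6), (0,3,4), (0,3,3), (0,3,1), (0,3,0), (0,10,0), (3,1,0)], [(91,(1)), (80,(5)), (69,(-5)), (29,(-10)), (4,(10))]), ([(0,20,1), (4,1,0), (4,7,0), (4,1,0), (4,3,0), (4,4,1), (4,1,0), (4,3,0), (4,3,0), (4,3,3), (4,3,1), (8,3,0), (8,3,0), (10,3,0)], [(103,(1)), (93,(5)), (92,(5)), (88,(-5)), (43,(-10)), (39,(10)), (38,(-10)), (37,(-25)), (27,(50)), (20,(50)), (19,(10)), (18,(-5)), (10,(-50)), (9,(25)), (7,(-50)), (6,(50)), (4,(100)), (3,(-50)), (1,(-100))])), (([(0,3,8), (0,3,7), (0,3,5), (0,3,4), (0,3,3), (0,3,1), (0,3,0), (0,13,0), (1,10,0), (1,1,3), (5,1,0)], [(119,(1)), (74,(-5)), (70,(5)), (62,(25)), (51,(-25)), (27,(-10)), (24,(10)), (16,(-50)), (1,(50))]), ([(0,22,1), (5,7,0), (5,1,0), (5,3,0), (6,1,0), (6,3,0), (6,3,0), (10,3,0), (10,3,0), (13,3,0)], [(104,(1)), (94,(5)), (93,(5)), (90,(-5)), (88,(-5)), (60,(10)), (45,(-10)), (43,(-50)), (38,(-25)), (37,(-10)), (28,(50)), (27,(100)), (20,(125)), (19,(25)), (15,(-100)),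 (10,(-125)), (9,(10)), (6,(50)), (4,(250)), (3,(-50)), (1,(-250))])), (([(0,18,2), (4,16,0), (4,1,1), (4,7,1), (4,1,1), (4,3,1), (4,3,1), (4,3,0), (4,3,0), (5,2,2), (6,1,1), (6,3,1), (6,3,1), (6,3,0), (6,3,0), (11,6,0), (13,3,1), (13,3,1), (13,3,0), (13,3,0), (21,3,1), (23,3,0), (39,3,0)], [(117,(5)), (116,(5)), (110,(1)), (107,(-10)), (87,(-25)), (80,(10)), (68,(125)), (66,(125)), (62,(-50)), (61,(-125)), (59,(-125)), (56,(-5)), (53,(-125)), (50,(-250)), (49,(-625)), (47,(-250)), (44,(100)), (42,(625)), (41,(125)), (38,(-25)), (36,(250)), (35,(50)), (34,(-10)), (33,(250)), (32,(1250)), (31,(1245)), (29,(250)), (26,(-625)), (22,(50)), (21,(-250)), (20,(50)), (18,(-1250)), (17,(-2500)), (16,(-1250)), (15,(575)), (14,(1250)), (13,(25)), (12,(250)), (11,(450)), (9,(2500)), (8,(2400)), (7,(-1240)), (5,(-500)), (4,(25)), (3,(-2500)), (0,(-250))]), ([(0,4,6), (0,4,2), (1,3,4), (1,3,2), (3,3,1), (3,3,0), (5,7,1), (6,1,1), (6,3,1), (6,3,0), (11,3,0)], [(118,(5)), (108,(-10)), (107,(5)), (98,(1)), (93,(10)), (72,(-5)), (45,(-5)), (36,(-50)), (35,(-10)), (21,(50)), (11,(-100)), (8,(10)), (5,(100))])), (([], [(124,(1))]), ([(0,4,6)], [(120,(1)), (119,(5)), (109,(-10)), (94,(10)), (73,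(-5))]))]"
definition tg6 :: "(((nat \<times> nat \<times> nat) list \<times> (nat \<times> int) list) \<times> ((nat \<times> nat \<times> nat) list \<times> (nat \<times> int) list)) list" where "tg6 = [(([(0,3,8), (0,3,6), (0,3,5), (0,3,4), (0,3,2), (0,3,1), (0,3,0), (0,18,1), (0,19,0), (0,13,0), (2,1,4), (2,12,0), (3,11,0), (3,0,0), (6,0,0), (10,0,0), (13,0,0)], [(109,(5)), (100,(1)), (92,(-10)), (72,(5)), (69,(10)), (63,(25)), (56,(-25)), (53,(-25)), (49,(-5)), (47,(-5)), (37,(50)), (36,(50)), (28,(-10)), (24,(10)), (21,(-50)), (16,(-50)), (10,(25))]), ([(0,1,6)], [(73,(1))])), (([(0,3,9), (0,3,8), (0,3,6), (0,3,5), (0,3,4), (0,3,2), (0,3,1), (0,13,1), (1,10,1), (1,1,4), (4,9,0), (4,1,1), (5,4,0)], [(123,(1)), (87,(-5)), (83,(5)), (78,(25)), (39,(-10)), (26,(-50)), (23,(-25)), (20,(10)), (19,(50)), (17,(-125)), (12,(125)), (10,(-100)), (5,(-250)), (4,(100)), (3,(50)), (1,(200))]), ([(0,22,2), (3,15,0), (3,9,0), (3,7,1), (3,1,1), (3,3,1), (5,1,1), (5,3,1), (5,3,1), (5,11,0), (14,3,1), (14,3,1), (20,3,1)], [(111,(1)), (102,(5)), (101,(5)), (76,(10)), (74,(-5)), (57,(-50)), (56,(25)), (55,(-5)), (54,(25)), (51,(-10)), (50,(-25)), (49,(-10)), (48,(-25)), (46,(-50)), (39,(100)), (38,(-50)),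 (37,(-125)), (36,(25)), (35,(-50)), (30,(125)), (29,(25)), (23,(50)), (22,(250)), (21,(250)), (20,(-50)), (19,(50)), (16,(-125)), (15,(10)), (12,(-250)), (11,(-450)), (10,(-200)), (9,(175)), (8,(250)), (7,(-50)), (5,(500)), (4,(500)), (3,(-250)), (1,(-500)), (0,(-100))])), (([(0,18,3), (1,17,0), (2,18,0), (3,16,1), (3,1,2), (3,7,2), (6,7,2), (6,1,2), (6,3,2), (6,3,2), (6,3,1), (6,3,1), (7,2,3), (9,12,1), (9,1,2), (9,7,1), (11,1,3), (12,1,2), (12,3,2), (12,3,2), (13,3,1), (13,3,1), (19,1,1), (19,7,0), (19,4,0), (22,1,2), (22,3,2), (22,3,2), (22,9,0), (22,3,1), (22,3,1), (22,4,1), (26,4,2), (27,5,0), (27,0,0), (29,1,0), (29,3,2), (29,3,0), (31,3,2), (33,1,1), (33,3,3), (33,3,1), (33,3,1), (40,0,0), (51,0,0), (54,3,1), (56,3,0), (59,3,1), (62,0,0), (64,3,0)], [(121,(5)), (120,(5)), (113,(-10)), (107,(-25)), (102,(5)), (101,(5)), (99,(-25)), (97,(10)), (96,(25)), (91,(1)), (90,(50)), (85,(25)), (83,(-10)), (82,(125)), (81,(-25)), (80,(125)), (78,(-50)), (77,(-125)), (75,(-125)), (68,(-5)), (67,(-50)), (65,(-125)), (63,(-240)), (62,(-625)), (61,(125)), (60,(-250)), (58,(100)), (55,(-125)), (54,(-25)), (50,(-25)), (48,(500)), (47,(50)), (46,(-10)), (45,(250)), (44,(1200)), (43,(1245)),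 (42,(-240)), (41,(250)), (40,(-125)), (39,(-50)), (37,(120)), (36,(625)), (35,(120)), (33,(-50)), (32,(-75)), (31,(-250)), (30,(-450)), (28,(-1250)), (27,(-2400)), (26,(-1250)), (25,(825)), (24,(375)), (23,(50)), (22,(-250)), (21,(-625)), (20,(-1250)), (19,(-225)), (18,(240)), (17,(700)), (16,(50)), (15,(2500)), (14,(2400)), (13,(-1750)), (11,(1250)), (10,(1250)), (9,(-450)), (8,(-225)), (7,(-2300)), (6,(3150)), (5,(-700)), (4,(-2250)), (3,(400)), (2,(-2500)), (1,(1750)), (0,(635))]), ([(0,4,7), (0,4,3), (1,3,5), (1,3,3), (3,3,2), (3,3,1), (3,11,0), (5,7,2), (7,1,2), (8,3,2), (8,3,1), (8,11,0), (16,3,1)], [(122,(5)), (114,(-10)), (113,(5)), (103,(1)), (101,(10)), (96,(5)), (85,(-5)), (75,(-10)), (52,(-5)), (51,(-5)), (48,(-50)), (47,(-10)), (40,(-25)), (31,(50)), (25,(50)), (17,(-100)), (14,(10)), (12,(10)), (11,(25)), (9,(100)), (0,(-50))])), (([], [(125,(1))]), ([(0,4,7), (0,18,0), (2,7,3), (5,1,3), (5,7,2), (5,15,0), (6,1,2), (6,7,1), (7,4,2), (10,1,1), (11,3,4), (11,3,2), (11,0,0), (24,3,2), (26,3,1), (34,3,1), (36,0,0)], [(123,(5)), (115,(-10)), (113,(5)), (104,(1)), (102,(10)), (86,(-5)), (81,(10)), (74,(-10)), (67,(25)), (66,(5)), (61,(-50)), (56,(50)), (54,(50)), (53,(-5)),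 (52,(-5)), (49,(-25)), (48,(-175)), (47,(-25)), (46,(-50)), (42,(100)), (38,(-100)), (37,(-250)), (35,(-100)), (32,(50)), (31,(125)), (30,(250)), (29,(50)), (26,(-10)), (23,(100)), (22,(500)), (21,(500)), (19,(100)), (18,(-50)), (17,(-250)), (16,(-250)), (14,(50)), (12,(-475)), (11,(-990)), (10,(-500)), (9,(500)), (8,(500)), (7,(-100)), (5,(1000)), (4,(1000)), (3,(-500)), (1,(-1000)), (0,(-50))])), (([(0,3,9), (0,3,8), (0,3,7), (0,3,5), (0,3,4), (0,3,2), (0,3,1), (0,3,0), (0,19,0), (3,1,1), (3,4,1)], [(108,(1)), (99,(5)), (92,(-5)), (30,(-10)), (29,(-50)), (16,(100)), (11,(10)), (8,(-100)), (3,(50))]), ([(0,20,2), (3,16,0), (3,1,1), (3,7,1), (3,1,1), (3,3,1), (3,3,0), (4,2,2), (4,1,1), (4,3,1), (4,3,1), (4,3,0), (4,3,0), (9,6,0), (11,3,1), (11,3,1), (11,3,0), (11,3,0), (19,3,1), (21,3,0), (36,3,0)], [(116,(1)), (110,(5)), (109,(5)), (87,(-5)), (68,(25)), (66,(25)), (62,(-10)), (61,(-25)), (59,(-25)), (56,(-25)), (53,(-25)), (50,(-50)), (49,(-125)), (47,(-50)), (44,(50)), (42,(125)), (41,(25)), (38,(-50)), (36,(50)), (35,(10)), (34,(-5)), (33,(50)), (32,(250)), (31,(240)), (29,(50)), (26,(-125)), (22,(100)), (21,(-50)), (20,(25)), (18,(-250)), (17,(-500)), (16,(-250)), (15,(75)),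 (14,(250)), (13,(50)), (12,(50)), (9,(500)), (8,(450)), (7,(-240)), (5,(-100)), (4,(50)), (3,(-500)), (0,(-50))])), (([(0,3,10), (0,3,9), (0,3,8), (0,3,6), (0,3,5), (0,3,3), (0,3,2), (0,3,1), (0,11,0), (0,20,0), (0,10,1), (0,8,1), (1,4,4), (1,17,0), (5,1,2), (9,4,2), (13,4,1)], [(114,(1)), (97,(25)), (95,(-5)), (90,(5)), (89,(25)), (76,(-50)), (73,(25)), (72,(25)), (69,(-50)), (58,(-25)), (57,(-25)), (55,(-50)), (53,(-125)), (52,(-50)), (51,(50)), (49,(-25)), (45,(25)), (42,(-10)), (41,(-50)), (39,(125)), (36,(225)), (35,(-125)), (34,(225)), (33,(50)), (29,(50)), (28,(-125)), (26,(100)), (21,(250)), (20,(-500)), (18,(-250)), (17,(10)), (16,(-250)), (15,(250)), (14,(25)), (13,(50)), (11,(-250)), (10,(50)), (9,(500)), (8,(500)), (7,(-200)), (5,(125)), (3,(-500)), (0,(-50))]), ([(0,20,3), (0,17,0), (1,18,0), (2,16,1), (2,1,2), (2,7,2), (5,7,2), (5,1,2), (5,3,2), (5,3,1), (6,2,3), (7,12,1), (7,1,2), (7,7,1), (9,1,3), (11,1,2), (11,3,2), (11,3,2), (12,3,1), (12,3,1), (18,1,1), (18,7,0), (18,4,0), (21,1,2), (21,3,2), (21,3,2), (21,9,0), (21,3,1), (21,3,1), (21,4,1), (24,4,2), (25,5,0), (25,0,0), (27,1,0), (27,3,2), (27,3,0), (29,3,2), (31,1,1), (31,3,3), (31,3,1),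 (31,3,1), (36,0,0), (44,0,0), (47,3,1), (49,3,0), (50,3,1), (53,0,0), (56,3,0)], [(120,(1)), (115,(5)), (107,(-5)), (102,(25)), (101,(25)), (99,(-5)), (96,(5)), (91,(5)), (90,(10)), (85,(5)), (84,(-120)), (83,(-50)), (82,(25)), (81,(-5)), (80,(25)), (78,(-10)), (77,(-25)), (75,(-25)), (68,(-25)), (67,(-10)), (65,(-25)), (62,(-125)), (61,(25)), (60,(-50)), (58,(50)), (55,(-25)), (54,(-5)), (50,(-50)), (48,(100)), (47,(10)), (46,(-5)), (45,(50)), (43,(240)), (41,(50)), (40,(-25)), (39,(-10)), (36,(125)), (33,(-10)), (32,(75)), (31,(-50)), (30,(-75)), (28,(-250)), (26,(-250)), (25,(125)), (24,(75)), (23,(250)), (22,(-50)), (21,(-125)), (20,(-250)), (17,(1250)), (16,(10)), (15,(500)), (14,(450)), (13,(-350)), (12,(-1200)), (11,(250)), (10,(250)), (9,(150)), (7,(-700)), (6,(750)), (5,(2260)), (4,(-450)), (3,(-400)), (2,(-500)), (1,(-2050)), (0,(135))]))]"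
definition tgd :: "nat \<Rightarrow> ((nat \<times> nat \<times> nat) list \<times> (nat \<times> int) list) \<times> ((nat \<times> nat \<times> nat) list \<times> (nat \<times> int) list)" where "tgd j = (if j < 20 then tg0 ! (j - 0) else if j < 40 then tg1 ! (j - 20) else if j < 60 then tg2 ! (j - 40) else if j < 80 then tg3 ! (j - 60) else if j < 100 then tg4 ! (j - 80) else if j < 120 then tg5 ! (j - 100) else tg6 ! (j - 120))"
lemma tchk0: "list_all (\<lambda>j. tcheck rl 23 Wl (Wl!j @ [False]) (fst (tgd j)) \<and> tcheck rl 23 Wl (Wl!j @ [True]) (snd (tgd j))) [0..<20]" by code_simp
lemma tchk1: "list_all (\<lambda>j. tcheck rl 23 Wl (Wl!j @ [False]) (fst (tgd j)) \<and> tcheck rl 23 Wl (Wl!j @ [True]) (snd (tgd j))) [20..<40]" by code_simp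
lemma tchk2: "list_all (\<lambda>j. tcheck rl 23 Wl (Wl!j @ [False]) (fst (tgd j)) \<and> tcheck rl 23 Wl (Wl!j @ [True]) (snd (tgd j))) [40..<60]" by code_simp
lemma tchk3: "list_all (\<lambda>j. tcheck rl 23 Wl (Wl!j @ [False]) (fst (tgd j)) \<and> tcheck rl 23 Wl (Wl!j @ [True]) (snd (tgd j))) [60..<80]" by code_simp
lemma tchk4: "list_all (\<lambda>j. tcheck rl 23 Wl (Wl!j @ [False]) (fst (tgd j)) \<and> tcheck rl 23 Wl (Wl!j @ [True]) (snd (tgd j))) [80..<100]" by code_simp
lemma tchk5: "list_all (\<lambda>j. tcheck rl 23 Wl (Wl!j @ [False]) (fst (tgd j)) \<and> tcheck rl 23 Wl (Wl!j @ [True]) (snd (tgd j))) [100..<120]" by code_simp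
lemma tchk6: "list_all (\<lambda>j. tcheck rl 23 Wl (Wl!j @ [False]) (fst (tgd j)) \<and> tcheck rl 23 Wl (Wl!j @ [True]) (snd (tgd j))) [120..<126]" by code_simp
lemma tchk_all: "list_all (\<lambda>j. tcheck rl 23 Wl (Wl!j @ [False]) (fst (tgd j)) \<and> tcheck rl 23 Wl (Wl!j @ [True]) (snd (tgd j))) [0..<126]"
proof -
  note c0 = tchk0
  note c1 = list_all_upt_split[OF c0 tchk1]
  note c2 = list_all_upt_split[OF c1 tchk2]
  note c3 = list_all_upt_split[OF c2 tchk3]
  note c4 = list_all_upt_split[OF c3 tchk4]
  note c5 = list_all_upt_split[OF c4 tchk5]
  note c6 = list_all_upt_split[OF c5 tchk6]
  show ?thesis using c6 by simp
qed
lemma wev4: "wev [False,False,False,False] = sl2z_one"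
  by (rule sl2z_eqI) (simp add: sl2z_mult.rep_eq sl2z_s.rep_eq sl2z_one.rep_eq)
lemma wev5: "wev [True,False,True,False,True] = wev [False]"
  by (rule sl2z_eqI) (simp add: sl2z_mult.rep_eq sl2z_s.rep_eq sl2z_one.rep_eq sl2z_u.rep_eq)

lemma v0: "valid (rl 0)"
proof -
  have e: "rl 0 = r0" by (simp add: rl_def)
  show ?thesis unfolding valid_def e r0_def fst_conv snd_conv wev4 by (simp add: gen_ideal.zero)
qed
lemma v1: "valid (rl 1)"
proof -
  have e: "rl 1 = r1" by (simp add: rl_def)
  show ?thesis unfolding valid_def e r1_def fst_conv snd_conv wev5 by (simp add: gen_ideal.zero)
qed
lemma v2: "valid (rl 2)"
proof -
  let ?X = "[([True],1),([],-1)] :: wpoly"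
  have x: "gr_u - gr_one = pev ?X" by (simp add: gr_u_def gr_one_def single_uminus)
  have o: "gr_one = pev [([],1)]" by (simp add: gr_one_def)
  have p: "gr_pow (gr_u - gr_one) 5 = pev (pmul (pmul (pmul (pmul (pmul [([],1)] ?X) ?X) ?X) ?X) ?X)"
    unfolding x by (simp add: numeral_eq_Suc o pev_pmul del: pev_Cons)
  also have "\<dots> = pev ((fst (rl 2), 1) # negp (snd (rl 2)))"
    by (rule check_eq) code_simp
  finally have "gr_pow (gr_u - gr_one) 5 = Poly_Mapping.single (wev (fst (rl 2))) 1 - pev (snd (rl 2))"
    by (simp add: pev_negp)
  then show ?thesis unfolding valid_def using gen_ideal.gen by metis
qed

lemma V: "r < 23 \<Longrightarrow> valid (rl r)"
proof -
  have "\<forall>r<n. valid (rl r)" if "n \<le> 23" for n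
    using that
  proof (induction n)
    case 0 then show ?case by simp
  next
    case (Suc n)
    have IH: "\<forall>r<n. valid (rl r)" using Suc by simp
    have "valid (rl n)"
    proof (cases "n < 3")
      case True
      then have "n = 0 \<or> n = 1 \<or> n = 2" by auto
      then show ?thesis using v0 v1 v2 by auto
    next
      case False
      have "\<forall>n\<in>{3..<23}. dcheck rl n (dv n)" using dchk unfolding list_all_iff set_upt .
      then have "dcheck rl n (dv n)" using Suc.prems False by simp
      then show ?thesis using dcheck_sound IH by blast
    qed
    then show ?case using IH less_Suc_eq by auto
  qed
  then show "r < 23 \<Longrightarrow> valid (rl r)" by blast
qed

lemma T: "w \<in> set Wl \<Longrightarrow> Poly_Mapping.single (wev (w @ [t])) 1 \<in> Mset (wev ` set Wl) Iu"
proof -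
  assume "w \<in> set Wl"
  then obtain j where j: "j < length Wl" "w = Wl ! j" by (auto simp: in_set_conv_nth)
  then have A: "tcheck rl 23 Wl (Wl!j @ [False]) (fst (tgd j)) \<and> tcheck rl 23 Wl (Wl!j @ [True]) (snd (tgd j))"
  proof -
    have "\<forall>j\<in>{0..<length Wl}. tcheck rl 23 Wl (Wl!j @ [False]) (fst (tgd j)) \<and> tcheck rl 23 Wl (Wl!j @ [True]) (snd (tgd j))"
      using tchk_all unfolding list_all_iff set_upt Wl_len .
    then show ?thesis using j by simp
  qed
  show ?thesis
  proof (cases t)
    case True then show ?thesis using tcheck_sound[of 23 rl, OF V conjunct2[OF A]] j(2) by simp
  next
    case False then show ?thesis using tcheck_sound[of 23 rl, OF V conjunct1[OF A]] j(2) by simp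
  qed
qed

theorem proposition1:
  fixes n :: nat
  assumes "1 \<le> n" and "n \<le> 5"
  shows "fg_quotient (gen_ideal (gr_pow (gr_u - gr_one) n))"
  by (rule final_assembly[OF V Wl_nil T assms])


end
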